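(* Let $G$ be a locally path connected, path connected, semilocally simply connected topological group with identity $1_G$, and let $H=\{[\gamma]\in\Pi_1(G):\gamma(0)=1_G\}$ be its universal covering group, with multiplication $[\gamma]\otimes[\eta]=[t\mapsto\gamma(t)\eta(t)]$, topology as a subspace of $\Pi_1(G)$, and covering homomorphism $p\colon H\to G$, $p([\gamma])=\gamma(1)$. Let $H\ltimes_p G$ be the transformation groupoid of the left action $[\eta]\cdot g=p([\eta])g$ of $H$ on $G$. Then the map $J\colon H\ltimes_p G\to\Pi_1(G)$, $J([\gamma],g)=[\gamma\cdot g]$ with $(\gamma\cdot g)(t)=\gamma(t)g$, is an isomorphism of topological groupoids. In particular $\Pi_1(G)$ is isomorphic to a transformation groupoid.
   Context: $\Pi_1(G)$ is the fundamental groupoid: endpoint-fixing path-homotopy classes $[\gamma]$ of paths in $G$, with range $\gamma(1)$, source $\gamma(0)$, product $[\alpha][\beta]=[\alpha\,\Box\,\beta]$ when $\alpha(0)=\beta(1)$ (where $\alpha\,\Box\,\beta$ first traverses $\beta$ then $\alpha$), and inverse given by the reversed path; it carries the UC topology, generated by the sets $N([\gamma],U,V)=\{[\delta\,\Box\,\gamma\,\Box\,\theta] : \delta\text{ a path in }U,\ \delta(0)=\gamma(1),\ \theta\text{ a path in }V,\ \theta(1)=\gamma(0)\}$ with $U,V$ path connected relatively inessential open neighbourhoods (a set $V$ is relatively inessential if $\pi_1(V,x)\to\pi_1(G,x)$ induced by inclusion is trivial). The transformation groupoid $H\ltimes_p G$ has underlying space $H\times G$ (product topology), source $(\eta,g)\mapsto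 g$, range $(\eta,g)\mapsto p(\eta)g$; $(\eta,h)$ and $(\gamma,g)$ are composable iff $h=p(\gamma)g$, with $(\eta,h)(\gamma,g)=(\eta\otimes\gamma,g)$, and $(\gamma,g)^{-1}=(\gamma^{-1},p(\gamma)g)$. *)

theory Defs
  imports "HOL-Analysis.Analysis" "HOL-Algebra.Group"
begin

definition topological_group :: "'a topology \<Rightarrow> 'a monoid \<Rightarrow> bool" where
  "topological_group X G \<longleftrightarrow> group G \<and> carrier G = topspace X \<and>
     continuous_map (prod_topology X X) X (\<lambda>(x, y). x \<otimes>\<^bsub>G\<^esub> y) \<and>
     continuous_map X X (\<lambda>x. inv\<^bsub>G\<^esub> x)"

text \<open>Concatenation: pjoin a b first traverses a, then b.
  The paper's alpha Box beta (first beta, then alpha) is pjoin beta alpha.\<close>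
definition pjoin :: "(real \<Rightarrow> 'a) \<Rightarrow> (real \<Rightarrow> 'a) \<Rightarrow> real \<Rightarrow> 'a" where
  "pjoin g1 g2 = (\<lambda>x. if x \<le> 1/2 then g1 (2 * x) else g2 (2 * x - 1))"

definition preverse :: "(real \<Rightarrow> 'a) \<Rightarrow> real \<Rightarrow> 'a" where
  "preverse g = (\<lambda>x. g (1 - x))"

definition path_homotopic :: "'a topology \<Rightarrow> (real \<Rightarrow> 'a) \<Rightarrow> (real \<Rightarrow> 'a) \<Rightarrow> bool" where
  "path_homotopic X p q \<longleftrightarrow> pathin X p \<and> pathin X q \<and> p 0 = q 0 \<and> p 1 = q 1 \<and>
     homotopic_with (\<lambda>r. r 0 = p 0 \<and> r 1 = p 1) (top_of_set {0..1}) X p q"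

definition path_class :: "'a topology \<Rightarrow> (real \<Rightarrow> 'a) \<Rightarrow> (real \<Rightarrow> 'a) set" where
  "path_class X p = {q. path_homotopic X p q}"

definition fundamental_groupoid :: "'a topology \<Rightarrow> (real \<Rightarrow> 'a) set set" where
  "fundamental_groupoid X = {path_class X p | p. pathin X p}"

definition rep :: "(real \<Rightarrow> 'a) set \<Rightarrow> real \<Rightarrow> 'a" where
  "rep c = (SOME p. p \<in> c)"

definition pg_source :: "(real \<Rightarrow> 'a) set \<Rightarrow> 'a" where
  "pg_source c = rep c 0"

definition pg_range :: "(real \<Rightarrow> 'a) set \<Rightarrow> 'a" where
  "pg_range c = rep c 1"

text \<open>[alpha][beta] = [alpha Box beta] (first beta, then alpha), defined when alpha(0) = beta(1).\<close>
definition pg_mult :: "'a topology \<Rightarrow> (real \<Rightarrow> 'a) set \<Rightarrow> (real \<Rightarrow> 'a) set \<Rightarrow> (real \<Rightarrow> 'a) set" where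
  "pg_mult X a b = path_class X (pjoin (rep b) (rep a))"

definition pg_inv :: "'a topology \<Rightarrow> (real \<Rightarrow> 'a) set \<Rightarrow> (real \<Rightarrow> 'a) set" where
  "pg_inv X a = path_class X (preverse (rep a))"

definition null_loop_at :: "'a topology \<Rightarrow> 'a set \<Rightarrow> 'a \<Rightarrow> bool" where
  \<comment> \<open>pi_1(V,x) \<rightarrow> pi_1(X,x) induced by inclusion is trivial\<close>
  "null_loop_at X V x \<longleftrightarrow>
     (\<forall>g. pathin (subtopology X V) g \<and> g 0 = x \<and> g 1 = x \<longrightarrow> path_homotopic X g (\<lambda>t. x))"

definition relatively_inessential :: "'a topology \<Rightarrow> 'a set \<Rightarrow> bool" where
  "relatively_inessential X V \<longleftrightarrow> V \<subseteq> topspace X \<and> (\<forall>x\<in>V. null_loop_at X V x)"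

definition semilocally_simply_connected :: "'a topology \<Rightarrow> bool" where
  "semilocally_simply_connected X \<longleftrightarrow>
     (\<forall>x\<in>topspace X. \<exists>V. openin X V \<and> x \<in> V \<and> null_loop_at X V x)"

definition uc_nbhd :: "'a topology \<Rightarrow> (real \<Rightarrow> 'a) set \<Rightarrow> 'a set \<Rightarrow> 'a set \<Rightarrow> (real \<Rightarrow> 'a) set set" where
  \<comment> \<open>N([gamma],U,V) = {[delta Box gamma Box theta]}: first theta, then gamma, then delta\<close>
  "uc_nbhd X c U V =
     {path_class X (pjoin (pjoin \<theta> (rep c)) \<delta>) | \<delta> \<theta>.
        pathin (subtopology X U) \<delta> \<and> \<delta> 0 = pg_range c \<and>
        pathin (subtopology X V) \<theta> \<and> \<theta> 1 = pg_source c}"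

definition uc_basis :: "'a topology \<Rightarrow> (real \<Rightarrow> 'a) set set set" where
  "uc_basis X = {uc_nbhd X c U V | c U V. c \<in> fundamental_groupoid X \<and>
       openin X U \<and> path_connectedin X U \<and> relatively_inessential X U \<and> pg_range c \<in> U \<and>
       openin X V \<and> path_connectedin X V \<and> relatively_inessential X V \<and> pg_source c \<in> V}"

definition uc_topology :: "'a topology \<Rightarrow> (real \<Rightarrow> 'a) set topology" where
  "uc_topology X = topology_generated_by (uc_basis X)"

definition ucg_carrier :: "'a topology \<Rightarrow> 'a monoid \<Rightarrow> (real \<Rightarrow> 'a) set set" where
  "ucg_carrier X G = {c \<in> fundamental_groupoid X. pg_source c = \<one>\<^bsub>G\<^esub>}"

definition ucg_mult :: "'a topology \<Rightarrow> 'a monoid \<Rightarrow> (real \<Rightarrow> 'a) set \<Rightarrow> (real \<Rightarrow> 'a) set \<Rightarrow> (real \<Rightarrow> 'a) set" where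
  "ucg_mult X G a b = path_class X (\<lambda>t. rep a t \<otimes>\<^bsub>G\<^esub> rep b t)"

definition ucg_inv :: "'a topology \<Rightarrow> 'a monoid \<Rightarrow> (real \<Rightarrow> 'a) set \<Rightarrow> (real \<Rightarrow> 'a) set" where
  "ucg_inv X G a = path_class X (\<lambda>t. inv\<^bsub>G\<^esub> (rep a t))"

definition ucg_proj :: "(real \<Rightarrow> 'a) set \<Rightarrow> 'a" where
  "ucg_proj a = rep a 1"

definition ucg_topology :: "'a topology \<Rightarrow> 'a monoid \<Rightarrow> (real \<Rightarrow> 'a) set topology" where
  "ucg_topology X G = subtopology (uc_topology X) (ucg_carrier X G)"

definition tg_arrows :: "'a topology \<Rightarrow> 'a monoid \<Rightarrow> ((real \<Rightarrow> 'a) set \<times> 'a) set" where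
  "tg_arrows X G = ucg_carrier X G \<times> topspace X"

definition tg_topology :: "'a topology \<Rightarrow> 'a monoid \<Rightarrow> ((real \<Rightarrow> 'a) set \<times> 'a) topology" where
  "tg_topology X G = prod_topology (ucg_topology X G) X"

definition tg_source :: "((real \<Rightarrow> 'a) set \<times> 'a) \<Rightarrow> 'a" where
  "tg_source x = snd x"

definition tg_range :: "'a monoid \<Rightarrow> ((real \<Rightarrow> 'a) set \<times> 'a) \<Rightarrow> 'a" where
  "tg_range G x = ucg_proj (fst x) \<otimes>\<^bsub>G\<^esub> snd x"

definition tg_mult :: "'a topology \<Rightarrow> 'a monoid \<Rightarrow> ((real \<Rightarrow> 'a) set \<times> 'a) \<Rightarrow> ((real \<Rightarrow> 'a) set \<times> 'a) \<Rightarrow> ((real \<Rightarrow> 'a) set \<times> 'a)" where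
  "tg_mult X G x y = (ucg_mult X G (fst x) (fst y), snd y)"

definition tg_inv :: "'a topology \<Rightarrow> 'a monoid \<Rightarrow> ((real \<Rightarrow> 'a) set \<times> 'a) \<Rightarrow> ((real \<Rightarrow> 'a) set \<times> 'a)" where
  "tg_inv X G x = (ucg_inv X G (fst x), ucg_proj (fst x) \<otimes>\<^bsub>G\<^esub> snd x)"

text \<open>A groupoid is given by its arrow space (a topology whose topspace is the set of arrows),
  source, range, product (x y composable iff source x = range y) and inverse.\<close>
definition topological_groupoid_iso ::
  "'x topology \<Rightarrow> ('x \<Rightarrow> 'o) \<Rightarrow> ('x \<Rightarrow> 'o) \<Rightarrow> ('x \<Rightarrow> 'x \<Rightarrow> 'x) \<Rightarrow> ('x \<Rightarrow> 'x) \<Rightarrow>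
   'y topology \<Rightarrow> ('y \<Rightarrow> 'p) \<Rightarrow> ('y \<Rightarrow> 'p) \<Rightarrow> ('y \<Rightarrow> 'y \<Rightarrow> 'y) \<Rightarrow> ('y \<Rightarrow> 'y) \<Rightarrow>
   ('x \<Rightarrow> 'y) \<Rightarrow> bool" where
  "topological_groupoid_iso T s r m i T' s' r' m' i' J \<longleftrightarrow>
     homeomorphic_map T T' J \<and>
     (\<forall>x\<in>topspace T. \<forall>y\<in>topspace T. s x = r y \<longleftrightarrow> s' (J x) = r' (J y)) \<and>
     (\<forall>x\<in>topspace T. \<forall>y\<in>topspace T. s x = r y \<longrightarrow> J (m x y) = m' (J x) (J y)) \<and>
     (\<forall>x\<in>topspace T. J (i x) = i' (J x))"

definition J_map :: "'a topology \<Rightarrow> 'a monoid \<Rightarrow> ((real \<Rightarrow> 'a) set \<times> 'a) \<Rightarrow> (real \<Rightarrow> 'a) set" where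
  "J_map X G x = path_class X (\<lambda>t. rep (fst x) t \<otimes>\<^bsub>G\<^esub> snd x)"

end

theory Submission
  imports Defs
begin

abbreviation "I01 \<equiv> top_of_set {0..1::real}"
abbreviation "SQ \<equiv> {0..1::real} \<times> {0..1::real}"

lemma ph_hom:
  assumes H: "continuous_map (top_of_set SQ) X H"
    and h0: "\<And>t. t \<in> {0..1} \<Longrightarrow> H(0,t) = p t"
    and h1: "\<And>t. t \<in> {0..1} \<Longrightarrow> H(1,t) = q t"
    and e0: "\<And>s. s \<in> {0..1} \<Longrightarrow> H(s,0) = p 0"
    and e1: "\<And>s. s \<in> {0..1} \<Longrightarrow> H(s,1) = p 1"
  shows "path_homotopic X p q"
proof -
  have c: "continuous_map I01 X (H \<circ> (\<lambda>t. (s,t)))" if "s \<in> {0..1}" for s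
    apply (rule continuous_map_compose[OF _ H])
    using that by (auto intro!: continuous_intros)
  have pp: "pathin X p" unfolding pathin_def
    by (rule continuous_map_eq[OF c[of 0]]) (auto simp: h0)
  have pq: "pathin X q" unfolding pathin_def
    by (rule continuous_map_eq[OF c[of 1]]) (auto simp: h1)
  have q0: "q 0 = p 0" using h1[of 0] e0[of 1] by simp
  have q1: "q 1 = p 1" using h1[of 1] e1[of 1] by simp
  have "homotopic_with (\<lambda>r. r 0 = p 0 \<and> r 1 = p 1) I01 X p q"
    apply (subst homotopic_with)
     apply force
    apply (rule exI[of _ H])
    using H h0 h1 e0 e1 by auto
  then show ?thesis unfolding path_homotopic_def using pp pq q0 q1 by auto
qed

lemma ph_pathin1: "path_homotopic X p q \<Longrightarrow> pathin X p"
  and ph_pathin2: "path_homotopic X p q \<Longrightarrow> pathin X q"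
  and ph_ends0: "path_homotopic X p q \<Longrightarrow> q 0 = p 0"
  and ph_ends1: "path_homotopic X p q \<Longrightarrow> q 1 = p 1"
  by (auto simp: path_homotopic_def)

lemma ph_refl: "pathin X p \<Longrightarrow> path_homotopic X p p"
  by (simp add: path_homotopic_def pathin_def)

lemma ph_sym:
  assumes "path_homotopic X p q" shows "path_homotopic X q p"
proof -
  have e: "q 0 = p 0" "q 1 = p 1" and pq: "pathin X p" "pathin X q"
    and h: "homotopic_with (\<lambda>r. r 0 = p 0 \<and> r 1 = p 1) I01 X p q"
    using assms unfolding path_homotopic_def by auto
  show ?thesis unfolding path_homotopic_def using homotopic_with_symD[OF h] e pq by simp
qed

lemma ph_trans:
  assumes "path_homotopic X p q" "path_homotopic X q r" shows "path_homotopic X p r"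
proof -
  have e: "q 0 = p 0" "q 1 = p 1" "r 0 = p 0" "r 1 = p 1" and pq: "pathin X p" "pathin X r"
    and h: "homotopic_with (\<lambda>r. r 0 = p 0 \<and> r 1 = p 1) I01 X p q"
    and k: "homotopic_with (\<lambda>r. r 0 = q 0 \<and> r 1 = q 1) I01 X q r"
    using assms unfolding path_homotopic_def by auto
  show ?thesis unfolding path_homotopic_def using homotopic_with_trans[OF h] k e pq by simp
qed

declare ph_trans [trans]

lemma ph_eqon:
  assumes p: "pathin X p" and e: "\<And>t. t \<in> {0..1} \<Longrightarrow> p t = q t"
  shows "path_homotopic X p q"
proof -
  have q: "pathin X q" using p e unfolding pathin_def
    by (metis continuous_map_eq topspace_euclidean_subtopology)
  have e0: "q 0 = p 0" "q 1 = p 1" using e[of 0] e[of 1] by auto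
  have "homotopic_with (\<lambda>r. r 0 = p 0 \<and> r 1 = p 1) I01 X p q"
  proof (rule homotopic_with_equal)
    show "continuous_map I01 X p" using p by (simp add: pathin_def)
    show "p x = q x" if "x \<in> topspace I01" for x using that e by simp
  qed (use e0 in auto)
  then show ?thesis using p q e0 unfolding path_homotopic_def by auto
qed

lemma ph_square:
  assumes F: "continuous_map (top_of_set SQ) X F"
    and P: "continuous_on {0..1} P" "P ` {0..1} \<subseteq> SQ"
    and Q: "continuous_on {0..1} Q" "Q ` {0..1} \<subseteq> SQ"
    and e: "P 0 = Q 0" "P 1 = Q 1"
  shows "path_homotopic X (F \<circ> P) (F \<circ> Q)"
proof (rule ph_hom)
  let ?K = "\<lambda>z::real\<times>real. (1 - fst z) *\<^sub>R P (snd z) + fst z *\<^sub>R Q (snd z)"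
  have cv: "(1 - s) *\<^sub>R a + s *\<^sub>R b \<in> SQ" if "a \<in> SQ" "b \<in> SQ" "s \<in> {0..1}" for a b :: "real\<times>real" and s
  proof -
    have "convex SQ" by (simp add: convex_Times)
    from convexD[OF this that(1,2), of "1-s" s] that(3) show ?thesis by auto
  qed
  have "continuous_map (top_of_set SQ) (top_of_set SQ) ?K"
  proof -
    have cP: "continuous_on SQ (\<lambda>z. P (snd z))"
      by (rule continuous_on_compose2[OF P(1) continuous_on_snd]) (auto simp: mem_Times_iff)
    have cQ: "continuous_on SQ (\<lambda>z. Q (snd z))"
      by (rule continuous_on_compose2[OF Q(1) continuous_on_snd]) (auto simp: mem_Times_iff)
    have "continuous_on SQ ?K"
      by (rule continuous_on_add[OF continuous_on_scaleR[OF continuous_on_diff[OF continuous_on_const continuous_on_fst[OF continuous_on_id]] cP] continuous_on_scaleR[OF continuous_on_fst[OF continuous_on_id] cQ]])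
    moreover have "?K z \<in> SQ" if "z \<in> SQ" for z
    proof -
      have z1: "fst z \<in> {0..1}" and z2: "snd z \<in> {0..1}" using that by (simp_all add: mem_Times_iff)
      have pP: "P (snd z) \<in> SQ" using P(2) z2 by (simp add: image_subset_iff)
      have qQ: "Q (snd z) \<in> SQ" using Q(2) z2 by (simp add: image_subset_iff)
      show ?thesis by (rule cv[OF pP qQ z1])
    qed
    ultimately have "continuous_on SQ ?K \<and> ?K \<in> SQ \<rightarrow> SQ" by (intro conjI Pi_I)
    then show ?thesis by (simp only: continuous_map_subtopology_eu)
  qed
  then show "continuous_map (top_of_set SQ) X (F \<circ> ?K)"
    by (rule continuous_map_compose[OF _ F])
  show "(F \<circ> ?K) (0, t) = (F \<circ> P) t" for t by simp
  show "(F \<circ> ?K) (1, t) = (F \<circ> Q) t" for t by simp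
  have cc: "(1 - s) *\<^sub>R x + s *\<^sub>R x = x" for s and x :: "real \<times> real"
    by (simp only: scaleR_add_left[symmetric]) simp
  show "(F \<circ> ?K) (s, 0) = (F \<circ> P) 0" for s using e cc by simp
  show "(F \<circ> ?K) (s, 1) = (F \<circ> P) 1" for s using e cc by simp
qed

lemma cm_comp:
  assumes "continuous_map (top_of_set S) X A" "continuous_on T f" "f ` T \<subseteq> S"
  shows "continuous_map (top_of_set T) X (\<lambda>x. A (f x))"
proof -
  have "continuous_map (top_of_set T) (top_of_set S) f" using assms by auto
  then show ?thesis using assms(1) continuous_map_compose unfolding o_def by blast
qed

lemma paste_SQ:
  assumes A: "continuous_map (top_of_set SQ) X A" and B: "continuous_map (top_of_set SQ) X B"
    and AB: "\<And>s. s \<in> {0..1} \<Longrightarrow> A(s,1) = B(s,0)"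
  shows "continuous_map (top_of_set SQ) X
           (\<lambda>z. if snd z \<le> 1/2 then A(fst z, 2 * snd z) else B(fst z, 2 * snd z - 1))"
proof (rule continuous_map_cases_le)
  show "continuous_map (top_of_set SQ) euclideanreal snd"
    by (simp add: continuous_on_snd)
  show "continuous_map (top_of_set SQ) euclideanreal (\<lambda>x. 1/2)" by simp
  show "continuous_map (subtopology (top_of_set SQ) {x \<in> topspace (top_of_set SQ). snd x \<le> 1/2}) X
     (\<lambda>z. A (fst z, 2 * snd z))"
    unfolding subtopology_subtopology
    by (rule cm_comp[OF A]; (intro continuous_intros)?; force simp: mem_Times_iff)
  show "continuous_map (subtopology (top_of_set SQ) {x \<in> topspace (top_of_set SQ). 1/2 \<le> snd x}) X
     (\<lambda>z. B (fst z, 2 * snd z - 1))"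
    unfolding subtopology_subtopology
    by (rule cm_comp[OF B]; (intro continuous_intros)?; force simp: mem_Times_iff)
  show "A (fst x, 2 * snd x) = B (fst x, 2 * snd x - 1)"
    if "x \<in> topspace (top_of_set SQ)" "snd x = 1/2" for x
  proof -
    have "2 * snd x = 1" "2 * snd x - 1 = 0" using that by auto
    moreover have "fst x \<in> {0..1}" using that by (auto simp: mem_Times_iff)
    ultimately show ?thesis using AB[of "fst x"] by simp
  qed
qed

lemma pathin_SQ: "pathin X p \<longleftrightarrow> continuous_map (top_of_set SQ) X (\<lambda>z. p (snd z))"
proof
  assume "pathin X p" then show "continuous_map (top_of_set SQ) X (\<lambda>z. p (snd z))"
    unfolding pathin_def by (rule cm_comp; (intro continuous_intros)?; force simp: mem_Times_iff)
next
  assume "continuous_map (top_of_set SQ) X (\<lambda>z. p (snd z))"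
  have "continuous_map I01 X (\<lambda>t. p (snd (0::real,t)))"
    by (rule cm_comp[OF \<open>continuous_map (top_of_set SQ) X (\<lambda>z. p (snd z))\<close>]; (intro continuous_intros)?; force)
  then show "pathin X p" unfolding pathin_def by simp
qed

lemma pathin_pjoin:
  assumes "pathin X p" "pathin X q" "p 1 = q 0"
  shows "pathin X (pjoin p q)"
proof -
  have "continuous_map (top_of_set SQ) X
           (\<lambda>z. if snd z \<le> 1/2 then p (snd (fst z, 2 * snd z)) else q (snd (fst z, 2 * snd z - 1)))"
    by (rule paste_SQ) (use assms in \<open>auto simp: pathin_SQ\<close>)
  then have "pathin X (\<lambda>t. if t \<le> 1/2 then p (2*t) else q (2*t - 1))"
    unfolding pathin_SQ by (rule continuous_map_eq) auto
  then show ?thesis by (simp add: pjoin_def)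
qed

lemma pathin_preverse: "pathin X p \<Longrightarrow> pathin X (preverse p)"
  unfolding pathin_def preverse_def
  by (rule cm_comp[of _ _ p]) (auto intro!: continuous_intros)

lemma pathin_pjoin_sub:
  assumes "pathin (subtopology X U) p" "pathin (subtopology X U) q" "p 1 = q 0"
  shows "pathin (subtopology X U) (pjoin p q)"
  using pathin_pjoin[OF assms] .

lemma pathin_preverse_sub:
  "pathin (subtopology X U) p \<Longrightarrow> pathin (subtopology X U) (preverse p)"
  by (rule pathin_preverse)

lemma pjoin_0 [simp]: "pjoin p q 0 = p 0" and pjoin_1 [simp]: "pjoin p q 1 = q 1"
  by (simp_all add: pjoin_def)

lemma preverse_0 [simp]: "preverse p 0 = p 1" and preverse_1 [simp]: "preverse p 1 = p 0"
  by (simp_all add: preverse_def)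

lemma hom_extract:
  assumes "path_homotopic X p q"
  obtains h where "continuous_map (top_of_set SQ) X h" "\<And>t. h(0,t) = p t" "\<And>t. h(1,t) = q t"
    "\<And>s. s \<in> {0..1} \<Longrightarrow> h(s,0) = p 0" "\<And>s. s \<in> {0..1} \<Longrightarrow> h(s,1) = p 1"
  using assms unfolding path_homotopic_def homotopic_with_def by auto

lemma ph_pjoin:
  assumes "path_homotopic X p p'" "path_homotopic X q q'" "p 1 = q 0"
  shows "path_homotopic X (pjoin p q) (pjoin p' q')"
proof -
  obtain h where h: "continuous_map (top_of_set SQ) X h" "\<And>t. h(0,t) = p t" "\<And>t. h(1,t) = p' t"
    "\<And>s. s \<in> {0..1} \<Longrightarrow> h(s,0) = p 0" "\<And>s. s \<in> {0..1} \<Longrightarrow> h(s,1) = p 1"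
    using hom_extract[OF assms(1)] by blast
  obtain k where k: "continuous_map (top_of_set SQ) X k" "\<And>t. k(0,t) = q t" "\<And>t. k(1,t) = q' t"
    "\<And>s. s \<in> {0..1} \<Longrightarrow> k(s,0) = q 0" "\<And>s. s \<in> {0..1} \<Longrightarrow> k(s,1) = q 1"
    using hom_extract[OF assms(2)] by blast
  show ?thesis
  proof (rule ph_hom)
    show "continuous_map (top_of_set SQ) X
           (\<lambda>z. if snd z \<le> 1/2 then h(fst z, 2 * snd z) else k(fst z, 2 * snd z - 1))"
      by (rule paste_SQ) (use h k assms(3) in auto)
  qed (use h k assms(3) in \<open>auto simp: pjoin_def\<close>)
qed

lemma ph_preverse:
  assumes "path_homotopic X p q"
  shows "path_homotopic X (preverse p) (preverse q)"
proof -
  obtain h where h: "continuous_map (top_of_set SQ) X h" "\<And>t. h(0,t) = p t" "\<And>t. h(1,t) = q t"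
    "\<And>s. s \<in> {0..1} \<Longrightarrow> h(s,0) = p 0" "\<And>s. s \<in> {0..1} \<Longrightarrow> h(s,1) = p 1"
    using hom_extract[OF assms(1)] by blast
  show ?thesis
  proof (rule ph_hom)
    show "continuous_map (top_of_set SQ) X (\<lambda>z. h(fst z, 1 - snd z))"
      by (rule cm_comp[OF h(1)]) (auto intro!: continuous_intros simp: mem_Times_iff)
  qed (use h in \<open>auto simp: preverse_def\<close>)
qed

lemma ph_reparam2:
  assumes p: "pathin X p"
    and "continuous_on {0..1} f" "f ` {0..1} \<subseteq> {0..1}"
    and "continuous_on {0..1} g" "g ` {0..1} \<subseteq> {0..1}"
    and "f 0 = g 0" "f 1 = g 1"
  shows "path_homotopic X (p \<circ> f) (p \<circ> g)"
proof -
  have "path_homotopic X ((\<lambda>z. p (fst z)) \<circ> (\<lambda>t. (f t, 0::real))) ((\<lambda>z. p (fst z)) \<circ> (\<lambda>t. (g t, 0::real)))"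
  proof (rule ph_square)
    show "continuous_map (top_of_set SQ) X (\<lambda>z. p (fst z))"
      using p unfolding pathin_def by (rule cm_comp) (auto intro!: continuous_intros)
  qed (use assms in \<open>auto intro!: continuous_intros simp: image_subset_iff\<close>)
  then show ?thesis by (simp add: o_def)
qed

lemma ph_reparam:
  assumes p: "pathin X p"
    and "continuous_on {0..1} f" "f ` {0..1} \<subseteq> {0..1}" "f 0 = 0" "f 1 = 1"
  shows "path_homotopic X p (p \<circ> f)"
  using ph_reparam2[OF p continuous_on_id _ assms(2,3)] assms by (simp add: o_def)

lemma ph_lunit:
  assumes "pathin X p"
  shows "path_homotopic X (pjoin (\<lambda>t. p 0) p) p"
proof -
  have "pjoin (\<lambda>t. p 0) p = p \<circ> (\<lambda>t. max 0 (2*t - 1))"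
    by (auto simp: pjoin_def fun_eq_iff max_def intro!: arg_cong[where f=p])
  moreover have "path_homotopic X p (p \<circ> (\<lambda>t. max 0 (2*t - 1)))"
    by (rule ph_reparam[OF assms]) (auto intro!: continuous_intros)
  ultimately show ?thesis using ph_sym by metis
qed

lemma ph_runit:
  assumes "pathin X p"
  shows "path_homotopic X (pjoin p (\<lambda>t. p 1)) p"
proof -
  have "pjoin p (\<lambda>t. p 1) = p \<circ> (\<lambda>t. min 1 (2*t))"
    by (auto simp: pjoin_def fun_eq_iff min_def intro!: arg_cong[where f=p])
  moreover have "path_homotopic X p (p \<circ> (\<lambda>t. min 1 (2*t)))"
    by (rule ph_reparam[OF assms]) (auto intro!: continuous_intros)
  ultimately show ?thesis using ph_sym by metis
qed

lemma ph_rinv: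
  assumes "pathin X p"
  shows "path_homotopic X (pjoin p (preverse p)) (\<lambda>t. p 0)"
proof -
  have "pjoin p (preverse p) = p \<circ> (\<lambda>t. 1 - \<bar>2*t - 1\<bar>)"
    by (auto simp: pjoin_def preverse_def fun_eq_iff abs_if intro!: arg_cong[where f=p])
  moreover have "(\<lambda>t. p 0) = p \<circ> (\<lambda>t. 0)" by auto
  moreover have "path_homotopic X (p \<circ> (\<lambda>t. 1 - \<bar>2*t - 1\<bar>)) (p \<circ> (\<lambda>t. 0))"
    by (rule ph_reparam2[OF assms]) (auto intro!: continuous_intros)
  ultimately show ?thesis by metis
qed

lemma ph_linv:
  assumes "pathin X p"
  shows "path_homotopic X (pjoin (preverse p) p) (\<lambda>t. p 1)"
proof -
  have "pjoin (preverse p) p = p \<circ> (\<lambda>t. \<bar>2*t - 1\<bar>)"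
    by (auto simp: pjoin_def preverse_def fun_eq_iff abs_if intro!: arg_cong[where f=p])
  moreover have "(\<lambda>t. p 1) = p \<circ> (\<lambda>t. 1)" by auto
  moreover have "path_homotopic X (p \<circ> (\<lambda>t. \<bar>2*t - 1\<bar>)) (p \<circ> (\<lambda>t. 1))"
    by (rule ph_reparam2[OF assms]) (auto intro!: continuous_intros)
  ultimately show ?thesis by metis
qed

lemma pathin_in: "pathin X p \<Longrightarrow> t \<in> {0..1} \<Longrightarrow> p t \<in> topspace X"
  unfolding pathin_def continuous_map_def by (auto simp: Pi_iff)

lemma pjoin_eqon:
  assumes "\<And>t. t \<in> {0..1} \<Longrightarrow> a t = a' t" "\<And>t. t \<in> {0..1} \<Longrightarrow> b t = b' t" "t \<in> {0..1}"
  shows "pjoin a b t = pjoin a' b' t"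
  using assms by (auto simp: pjoin_def)

lemma preverse_eqon:
  assumes "\<And>t. t \<in> {0..1} \<Longrightarrow> a t = a' t" "t \<in> {0..1}"
  shows "preverse a t = preverse a' t"
  using assms by (auto simp: preverse_def)

lemma ph_eqon_trans:
  assumes "path_homotopic X p q" "\<And>t. t \<in> {0..1} \<Longrightarrow> q t = r t"
  shows "path_homotopic X p r"
  using assms ph_trans ph_eqon ph_pathin2 by metis

lemma ph_assoc:
  assumes a: "pathin X a" and b: "pathin X b" and c: "pathin X c" and ab: "a 1 = b 0" and bc: "b 1 = c 0"
  shows "path_homotopic X (pjoin (pjoin a b) c) (pjoin a (pjoin b c))"
proof -
  let ?K = "pjoin a (pjoin b c)"
  let ?f = "\<lambda>t::real. min (2*t) (min (t + 1/4) ((t+1)/2))"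
  have K: "pathin X ?K" using a b c ab bc by (simp add: pathin_pjoin)
  have "path_homotopic X ?K (?K \<circ> ?f)"
  proof (rule ph_reparam[OF K])
    show "continuous_on {0..1} ?f" by (intro continuous_intros) auto
    show "?f ` {0..1} \<subseteq> {0..1}" by (auto simp: min_def)
  qed (auto simp: min_def)
  moreover have "(?K \<circ> ?f) t = pjoin (pjoin a b) c t" if "t \<in> {0..1}" for t
  proof -
    consider "t \<le> 1/4" | "1/4 < t" "t \<le> 1/2" | "1/2 < t" by linarith
    then show ?thesis
    proof cases
      case 1
      then have f: "?f t = 2*t" by (simp add: min_def)
      have "(?K \<circ> ?f) t = ?K (2*t)" by (simp only: comp_apply f)
      also have "\<dots> = a (2*(2*t))" using 1 unfolding pjoin_def by simp
      also have "\<dots> = pjoin (pjoin a b) c t" using 1 unfolding pjoin_def by simp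
      finally show ?thesis .
    next
      case 2
      then have f: "?f t = t + 1/4" by (simp add: min_def)
      have "(?K \<circ> ?f) t = ?K (t + 1/4)" by (simp only: comp_apply f)
      also have "\<dots> = b (2*(2*(t+1/4) - 1))" using 2 unfolding pjoin_def by simp
      also have "2*(2*(t+1/4) - 1) = 2*(2*t) - 1" by simp
      also have "b (2*(2*t) - 1) = pjoin (pjoin a b) c t" using 2 unfolding pjoin_def by simp
      finally show ?thesis .
    next
      case 3
      then have f: "?f t = (t+1)/2" by (simp add: min_def)
      have "(?K \<circ> ?f) t = ?K ((t+1)/2)" by (simp only: comp_apply f)
      also have "\<dots> = c (2*(2*((t+1)/2) - 1) - 1)" using 3 unfolding pjoin_def by simp
      also have "2*(2*((t+1)/2) - 1) - 1 = 2*t - 1" by simp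
      also have "c (2*t - 1) = pjoin (pjoin a b) c t" using 3 unfolding pjoin_def by simp
      finally show ?thesis .
    qed
  qed
  ultimately have "path_homotopic X ?K (pjoin (pjoin a b) c)"
    using ph_eqon_trans by blast
  then show ?thesis by (rule ph_sym)
qed

lemma ph_boundary:
  assumes F: "continuous_map (top_of_set SQ) X F"
  shows "path_homotopic X (\<lambda>t. F(t,0))
           (pjoin (pjoin (\<lambda>t. F(0,t)) (\<lambda>t. F(t,1))) (\<lambda>t. F(1,1-t)))"
proof -
  define u where "u = (\<lambda>t::real. max 0 (min 1 (4*t - 1)))"
  define v where "v = (\<lambda>t::real. min 1 (min (4*t) (2 - 2*t)))"
  have "path_homotopic X (F \<circ> (\<lambda>t. (t, 0))) (F \<circ> (\<lambda>t. (u t, v t)))"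
  proof (rule ph_square[OF F])
    show "continuous_on {0..1} (\<lambda>t. (u t, v t))" unfolding u_def v_def by (intro continuous_intros)
    show "continuous_on {0..1} (\<lambda>t::real. (t, 0::real))" by (intro continuous_intros)
    show "(\<lambda>t. (u t, v t)) ` {0..1} \<subseteq> SQ"
    proof (rule image_subsetI)
      fix t :: real assume "t \<in> {0..1}"
      then have "u t \<in> {0..1}" "v t \<in> {0..1}" unfolding u_def v_def by auto
      then show "(u t, v t) \<in> SQ" by simp
    qed
    show "(\<lambda>t::real. (t, 0::real)) ` {0..1} \<subseteq> SQ" by auto
    show "(0::real, 0::real) = (u 0, v 0)" unfolding u_def v_def by simp
    show "(1::real, 0::real) = (u 1, v 1)" unfolding u_def v_def by simp
  qed
  then have h: "path_homotopic X (\<lambda>t. F(t,0)) (\<lambda>t. F(u t, v t))" unfolding comp_def .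
  show ?thesis
  proof (rule ph_eqon_trans[OF h])
    fix t :: real assume t: "t \<in> {0..1}"
    consider "t \<le> 1/4" | "1/4 < t" "t \<le> 1/2" | "1/2 < t" by linarith
    then show "F(u t, v t) = pjoin (pjoin (\<lambda>t. F(0,t)) (\<lambda>t. F(t,1))) (\<lambda>t. F(1,1-t)) t"
    proof cases
      case 1
      then have "u t = 0" "v t = 2*(2*t)" using t unfolding u_def v_def by auto
      then show ?thesis using 1 unfolding pjoin_def by simp
    next
      case 2
      then have "u t = 2*(2*t) - 1" "v t = 1" unfolding u_def v_def by auto
      then show ?thesis using 2 unfolding pjoin_def by simp
    next
      case 3
      then have "u t = 1" "v t = 1 - (2*t - 1)" using t unfolding u_def v_def by auto
      then show ?thesis using 3 unfolding pjoin_def by simp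
    qed
  qed
qed



lemma pc_mem: "pathin X p \<Longrightarrow> p \<in> path_class X p"
  by (simp add: path_class_def ph_refl)

lemma FG_I: "pathin X p \<Longrightarrow> path_class X p \<in> fundamental_groupoid X"
  by (auto simp: fundamental_groupoid_def)

lemma FG_E:
  assumes "c \<in> fundamental_groupoid X"
  obtains p where "pathin X p" "c = path_class X p"
  using assms by (auto simp: fundamental_groupoid_def)

lemma pc_eq: "path_homotopic X p q \<Longrightarrow> path_class X p = path_class X q"
  unfolding path_class_def using ph_sym ph_trans by blast

lemma pc_eqD: "pathin X p \<Longrightarrow> path_class X p = path_class X q \<Longrightarrow> path_homotopic X p q"
proof -
  assume p: "pathin X p" and e: "path_class X p = path_class X q"
  have "p \<in> path_class X q" using pc_mem[OF p] e by simp
  then have "path_homotopic X q p" by (simp add: path_class_def)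
  then show ?thesis by (rule ph_sym)
qed

lemma rep_ph: "pathin X p \<Longrightarrow> path_homotopic X p (rep (path_class X p))"
proof -
  assume p: "pathin X p"
  have "rep (path_class X p) \<in> path_class X p"
    unfolding rep_def using pc_mem[OF p] by (rule someI[where P="\<lambda>q. q \<in> path_class X p"])
  then show ?thesis by (simp add: path_class_def)
qed

lemma rep_pathin: "c \<in> fundamental_groupoid X \<Longrightarrow> pathin X (rep c)"
  by (metis FG_E ph_pathin2 rep_ph)

lemma pc_rep: "c \<in> fundamental_groupoid X \<Longrightarrow> path_class X (rep c) = c"
  by (metis FG_E pc_eq rep_ph)

lemma rep_0: "pathin X p \<Longrightarrow> rep (path_class X p) 0 = p 0"
  using rep_ph ph_ends0 by metis

lemma rep_1: "pathin X p \<Longrightarrow> rep (path_class X p) 1 = p 1"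
  using rep_ph ph_ends1 by metis

lemma pg_source_pc: "pathin X p \<Longrightarrow> pg_source (path_class X p) = p 0"
  by (simp add: pg_source_def rep_0)

lemma pg_range_pc: "pathin X p \<Longrightarrow> pg_range (path_class X p) = p 1"
  by (simp add: pg_range_def rep_1)

lemma conj_null:
  assumes s: "pathin X \<sigma>" and g: "pathin X g" and e1: "\<sigma> 1 = g 0" and e2: "g 1 = g 0"
    and null: "path_homotopic X (pjoin (pjoin \<sigma> g) (preverse \<sigma>)) (\<lambda>t. \<sigma> 0)"
  shows "path_homotopic X g (\<lambda>t. g 0)"
proof -
  let ?r = "preverse \<sigma>"
  have r: "pathin X ?r" using s by (rule pathin_preverse)
  have sg: "pathin X (pjoin \<sigma> g)" using s g e1 by (rule pathin_pjoin)
  have linv: "path_homotopic X (pjoin ?r \<sigma>) (\<lambda>t. g 0)" using ph_linv[OF s] e1 by simp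
  have cy: "pathin X (\<lambda>t. g 0)" using ph_pathin2[OF linv] .
  have "path_homotopic X g (pjoin (\<lambda>t. g 0) g)" using ph_lunit[OF g] by (rule ph_sym)
  also have "path_homotopic X (pjoin (\<lambda>t. g 0) g) (pjoin (pjoin ?r \<sigma>) g)"
    by (rule ph_pjoin[OF ph_sym[OF linv] ph_refl[OF g]]) simp
  also have "path_homotopic X (pjoin (pjoin ?r \<sigma>) g) (pjoin ?r (pjoin \<sigma> g))"
    by (rule ph_assoc[OF r s g]) (simp_all add: e1)
  also have "path_homotopic X (pjoin ?r (pjoin \<sigma> g)) (pjoin ?r \<sigma>)"
  proof (rule ph_pjoin[OF ph_refl[OF r]])
    have "path_homotopic X (pjoin \<sigma> g) (pjoin (pjoin \<sigma> g) (\<lambda>t. g 0))"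
      using ph_sym[OF ph_runit[OF sg]] e2 by simp
    also have "path_homotopic X (pjoin (pjoin \<sigma> g) (\<lambda>t. g 0)) (pjoin (pjoin \<sigma> g) (pjoin ?r \<sigma>))"
      by (rule ph_pjoin[OF ph_refl[OF sg] ph_sym[OF linv]]) (simp add: e2)
    also have "path_homotopic X (pjoin (pjoin \<sigma> g) (pjoin ?r \<sigma>)) (pjoin (pjoin (pjoin \<sigma> g) ?r) \<sigma>)"
      by (rule ph_sym, rule ph_assoc[OF sg r s]) (simp_all add: e1 e2)
    also have "path_homotopic X (pjoin (pjoin (pjoin \<sigma> g) ?r) \<sigma>) (pjoin (\<lambda>t. \<sigma> 0) \<sigma>)"
      by (rule ph_pjoin[OF null ph_refl[OF s]]) simp
    also have "path_homotopic X (pjoin (\<lambda>t. \<sigma> 0) \<sigma>) \<sigma>" by (rule ph_lunit[OF s])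
    finally show "path_homotopic X (pjoin \<sigma> g) \<sigma>" .
  qed simp
  also have "path_homotopic X (pjoin ?r \<sigma>) (\<lambda>t. g 0)" by (rule linv)
  finally show ?thesis .
qed

lemma null_loop_mono:
  "null_loop_at X V x \<Longrightarrow> U \<subseteq> V \<Longrightarrow> null_loop_at X U x"
  unfolding null_loop_at_def pathin_subtopology by blast

definition good :: "'a topology \<Rightarrow> 'a set \<Rightarrow> bool" where
  "good X U \<longleftrightarrow> openin X U \<and> path_connectedin X U \<and> relatively_inessential X U"

lemma good_nbhd:
  assumes lpc: "locally_path_connected_space X" and sl: "semilocally_simply_connected X"
    and W: "openin X W" "x \<in> W"
  shows "\<exists>U. good X U \<and> x \<in> U \<and> U \<subseteq> W"
proof -
  have xt: "x \<in> topspace X" using W openin_subset by blast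
  obtain V where V: "openin X V" "x \<in> V" "null_loop_at X V x"
    using sl xt unfolding semilocally_simply_connected_def by blast
  obtain U where U: "openin X U" "path_connectedin X U" "x \<in> U" "U \<subseteq> V \<inter> W"
    using lpc V W unfolding locally_path_connected_space by (meson openin_Int IntI)
  have Ut: "U \<subseteq> topspace X" using U(1) openin_subset by blast
  have "null_loop_at X U y" if y: "y \<in> U" for y
    unfolding null_loop_at_def
  proof (intro allI impI)
    fix g assume g: "pathin (subtopology X U) g \<and> g 0 = y \<and> g 1 = y"
    obtain \<sigma> where s: "pathin X \<sigma>" "\<sigma> \<in> {0..1} \<rightarrow> U" "\<sigma> 0 = x" "\<sigma> 1 = y"
      using U(2) U(3) y unfolding path_connectedin by blast
    have sU: "pathin (subtopology X U) \<sigma>" using s by (auto simp: pathin_subtopology)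
    have gX: "pathin X g" using g by (simp add: pathin_subtopology)
    have lU: "pathin (subtopology X U) (pjoin (pjoin \<sigma> g) (preverse \<sigma>))"
      using g sU s by (intro pathin_pjoin pathin_preverse) auto
    then have lV: "pathin (subtopology X V) (pjoin (pjoin \<sigma> g) (preverse \<sigma>))"
      using U(4) by (auto simp: pathin_subtopology)
    have "path_homotopic X (pjoin (pjoin \<sigma> g) (preverse \<sigma>)) (\<lambda>t. x)"
      using V(3) lV s unfolding null_loop_at_def by simp
    then have "path_homotopic X g (\<lambda>t. g 0)"
      using conj_null[OF s(1) gX] g s by simp
    then show "path_homotopic X g (\<lambda>t. y)" using g by simp
  qed
  then have "good X U" unfolding good_def relatively_inessential_def using U Ut by blast
  then show ?thesis using U by blast
qed


lemma continuous_map_generated: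
  assumes "f \<in> topspace T \<rightarrow> \<Union>S" "\<And>B. B \<in> S \<Longrightarrow> openin T {x \<in> topspace T. f x \<in> B}"
  shows "continuous_map T (topology_generated_by S) f"
  unfolding continuous_map_def
proof (intro conjI allI impI)
  show "f \<in> topspace T \<rightarrow> topspace (topology_generated_by S)" using assms(1) by simp
  fix U assume "openin (topology_generated_by S) U"
  then have "generate_topology_on S U" by (rule openin_topology_generated_by)
  then show "openin T {x \<in> topspace T. f x \<in> U}"
  proof induction
    case Empty then show ?case by simp
  next
    case (Int a b)
    have "{x \<in> topspace T. f x \<in> a \<inter> b} = {x \<in> topspace T. f x \<in> a} \<inter> {x \<in> topspace T. f x \<in> b}" by auto
    then show ?case using Int by auto
  next
    case (UN K)
    have "{x \<in> topspace T. f x \<in> \<Union>K} = (\<Union>k\<in>K. {x \<in> topspace T. f x \<in> k})" by auto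
    then show ?case using UN by auto
  next
    case (Basis s) then show ?case using assms(2) by blast
  qed
qed

lemma uc_nbhd_E:
  assumes "e \<in> uc_nbhd X c U V"
  obtains \<delta> \<theta> where "e = path_class X (pjoin (pjoin \<theta> (rep c)) \<delta>)"
    "pathin (subtopology X U) \<delta>" "\<delta> 0 = pg_range c"
    "pathin (subtopology X V) \<theta>" "\<theta> 1 = pg_source c"
  using assms unfolding uc_nbhd_def by blast

lemma uc_nbhd_I:
  assumes "pathin (subtopology X U) \<delta>" "\<delta> 0 = pg_range c"
    "pathin (subtopology X V) \<theta>" "\<theta> 1 = pg_source c"
    "path_homotopic X (pjoin (pjoin \<theta> (rep c)) \<delta>) p"
  shows "path_class X p \<in> uc_nbhd X c U V"
  unfolding uc_nbhd_def using assms pc_eq[OF assms(5)] by blast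

lemma uc_nbhd_FG:
  assumes "c \<in> fundamental_groupoid X"
  shows "uc_nbhd X c U V \<subseteq> fundamental_groupoid X"
proof
  fix e assume "e \<in> uc_nbhd X c U V"
  then obtain \<delta> \<theta> where e: "e = path_class X (pjoin (pjoin \<theta> (rep c)) \<delta>)"
    "pathin (subtopology X U) \<delta>" "\<delta> 0 = pg_range c"
    "pathin (subtopology X V) \<theta>" "\<theta> 1 = pg_source c" by (rule uc_nbhd_E)
  have "pathin X (pjoin (pjoin \<theta> (rep c)) \<delta>)"
    using e rep_pathin[OF assms] by (intro pathin_pjoin) (auto simp: pathin_subtopology pg_source_def pg_range_def)
  then show "e \<in> fundamental_groupoid X" using e(1) by (simp add: FG_I)
qed

lemma uc_self:
  assumes c: "c \<in> fundamental_groupoid X" and U: "good X U" "pg_range c \<in> U"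
    and V: "good X V" "pg_source c \<in> V"
  shows "c \<in> uc_nbhd X c U V" "uc_nbhd X c U V \<in> uc_basis X"
proof -
  let ?r = "rep c"
  have r: "pathin X ?r" using c by (rule rep_pathin)
  have s: "?r 0 \<in> topspace X" "?r 1 \<in> topspace X"
    using r by (auto simp: path_start_in_topspace path_finish_in_topspace)
  have "path_homotopic X (pjoin (pjoin (\<lambda>t. ?r 0) ?r) (\<lambda>t. ?r 1)) (pjoin ?r (\<lambda>t. ?r 1))"
    by (rule ph_pjoin[OF ph_lunit[OF r] ph_refl]) (use s in auto)
  also have "path_homotopic X (pjoin ?r (\<lambda>t. ?r 1)) ?r" by (rule ph_runit[OF r])
  finally have h: "path_homotopic X (pjoin (pjoin (\<lambda>t. ?r 0) ?r) (\<lambda>t. ?r 1)) ?r" .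
  have "path_class X ?r \<in> uc_nbhd X c U V"
    by (rule uc_nbhd_I[OF _ _ _ _ h]) (use U V s in \<open>auto simp: pathin_subtopology pg_source_def pg_range_def\<close>)
  then show "c \<in> uc_nbhd X c U V" using pc_rep[OF c] by simp
  show "uc_nbhd X c U V \<in> uc_basis X"
    unfolding uc_basis_def using c U V by (auto simp: good_def)
qed

lemma topspace_uc:
  assumes lpc: "locally_path_connected_space X" and sl: "semilocally_simply_connected X"
  shows "topspace (uc_topology X) = fundamental_groupoid X"
proof
  show "topspace (uc_topology X) \<subseteq> fundamental_groupoid X"
    unfolding uc_topology_def topology_generated_by_topspace uc_basis_def
    using uc_nbhd_FG by blast
  show "fundamental_groupoid X \<subseteq> topspace (uc_topology X)"
  proof
    fix c assume c: "c \<in> fundamental_groupoid X"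
    have r: "pathin X (rep c)" using c by (rule rep_pathin)
    obtain U where U: "good X U" "pg_range c \<in> U"
      using good_nbhd[OF lpc sl, of "topspace X" "pg_range c"] r
      by (auto simp: pg_range_def path_finish_in_topspace)
    obtain V where V: "good X V" "pg_source c \<in> V"
      using good_nbhd[OF lpc sl, of "topspace X" "pg_source c"] r
      by (auto simp: pg_source_def path_start_in_topspace)
    show "c \<in> topspace (uc_topology X)"
      unfolding uc_topology_def topology_generated_by_topspace
      using uc_self[OF c U V] by blast
  qed
qed

lemma openin_uc_basis: "B \<in> uc_basis X \<Longrightarrow> openin (uc_topology X) B"
  unfolding uc_topology_def by (rule topology_generated_by_Basis)


lemma ph_assocI:
  assumes "pathin X a" "pathin X b" "pathin X c" "a 1 = b 0" "b 1 = c 0"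
  shows "path_homotopic X (pjoin a (pjoin b c)) (pjoin (pjoin a b) c)"
  using ph_sym[OF ph_assoc[OF assms]] .

lemma rearr1:
  assumes p: "pathin X r" "pathin X \<theta>" "pathin X \<rho>" "pathin X \<delta>" "pathin X s" "pathin X v"
    and e: "r 1 = \<theta> 0" "\<theta> 1 = \<rho> 0" "\<rho> 1 = \<delta> 0" "\<delta> 1 = s 0" "s 1 = v 0"
  shows "path_homotopic X (pjoin (pjoin (pjoin r (pjoin (pjoin \<theta> \<rho>) \<delta>)) s) v)
                          (pjoin (pjoin (pjoin r \<theta>) \<rho>) (pjoin (pjoin \<delta> s) v))"
proof -
  have tr: "pathin X (pjoin \<theta> \<rho>)" using p e by (simp add: pathin_pjoin)
  have M: "pathin X (pjoin (pjoin \<theta> \<rho>) \<delta>)" using tr p e by (simp add: pathin_pjoin)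
  have rM: "pathin X (pjoin r (pjoin (pjoin \<theta> \<rho>) \<delta>))" using M p e by (simp add: pathin_pjoin)
  have rt: "pathin X (pjoin r \<theta>)" using p e by (simp add: pathin_pjoin)
  have rtr: "pathin X (pjoin (pjoin r \<theta>) \<rho>)" using rt p e by (simp add: pathin_pjoin)
  have sv: "pathin X (pjoin s v)" using p e by (simp add: pathin_pjoin)
  have "path_homotopic X (pjoin (pjoin (pjoin r (pjoin (pjoin \<theta> \<rho>) \<delta>)) s) v)
          (pjoin (pjoin r (pjoin (pjoin \<theta> \<rho>) \<delta>)) (pjoin s v))"
    by (rule ph_assoc[OF rM p(5,6)]) (use e in simp_all)
  also have "path_homotopic X (pjoin (pjoin r (pjoin (pjoin \<theta> \<rho>) \<delta>)) (pjoin s v))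
          (pjoin (pjoin (pjoin (pjoin r \<theta>) \<rho>) \<delta>) (pjoin s v))"
  proof (rule ph_pjoin[OF _ ph_refl[OF sv]])
    have "path_homotopic X (pjoin r (pjoin (pjoin \<theta> \<rho>) \<delta>)) (pjoin (pjoin r (pjoin \<theta> \<rho>)) \<delta>)"
      by (rule ph_assocI[OF p(1) tr p(4)]) (use e in simp_all)
    also have "path_homotopic X (pjoin (pjoin r (pjoin \<theta> \<rho>)) \<delta>) (pjoin (pjoin (pjoin r \<theta>) \<rho>) \<delta>)"
      by (rule ph_pjoin[OF ph_assocI[OF p(1-3)] ph_refl[OF p(4)]]) (use e in simp_all)
    finally show "path_homotopic X (pjoin r (pjoin (pjoin \<theta> \<rho>) \<delta>)) (pjoin (pjoin (pjoin r \<theta>) \<rho>) \<delta>)" .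
  qed (use e in simp)
  also have "path_homotopic X (pjoin (pjoin (pjoin (pjoin r \<theta>) \<rho>) \<delta>) (pjoin s v))
          (pjoin (pjoin (pjoin r \<theta>) \<rho>) (pjoin \<delta> (pjoin s v)))"
    by (rule ph_assoc[OF rtr p(4) sv]) (use e in simp_all)
  also have "path_homotopic X (pjoin (pjoin (pjoin r \<theta>) \<rho>) (pjoin \<delta> (pjoin s v)))
          (pjoin (pjoin (pjoin r \<theta>) \<rho>) (pjoin (pjoin \<delta> s) v))"
    by (rule ph_pjoin[OF ph_refl[OF rtr] ph_assocI[OF p(4-6)]]) (use e in simp_all)
  finally show ?thesis .
qed

lemma rearr2:
  assumes p: "pathin X P" "pathin X L" "pathin X T" "pathin X R" "pathin X Q"
    and e: "P 1 = L 0" "L 1 = T 0" "T 1 = R 0" "R 1 = Q 0"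
  shows "path_homotopic X (pjoin (pjoin P (pjoin (pjoin L T) R)) Q)
                          (pjoin (pjoin (pjoin P L) T) (pjoin R Q))"
proof -
  have LT: "pathin X (pjoin L T)" using p e by (simp add: pathin_pjoin)
  have PL: "pathin X (pjoin P L)" using p e by (simp add: pathin_pjoin)
  have PLT: "pathin X (pjoin (pjoin P L) T)" using PL p e by (simp add: pathin_pjoin)
  have PLTR: "pathin X (pjoin (pjoin L T) R)" using LT p e by (simp add: pathin_pjoin)
  have "path_homotopic X (pjoin (pjoin P (pjoin (pjoin L T) R)) Q)
          (pjoin (pjoin (pjoin P (pjoin L T)) R) Q)"
    by (rule ph_pjoin[OF ph_assocI[OF p(1) LT p(4)] ph_refl[OF p(5)]]) (use e in simp_all)
  also have "path_homotopic X (pjoin (pjoin (pjoin P (pjoin L T)) R) Q)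
          (pjoin (pjoin (pjoin (pjoin P L) T) R) Q)"
    by (rule ph_pjoin[OF ph_pjoin[OF ph_assocI[OF p(1-3)] ph_refl[OF p(4)]] ph_refl[OF p(5)]])
       (use e in simp_all)
  also have "path_homotopic X (pjoin (pjoin (pjoin (pjoin P L) T) R) Q)
          (pjoin (pjoin (pjoin P L) T) (pjoin R Q))"
    by (rule ph_assoc[OF PLT p(4,5)]) (use e in simp_all)
  finally show ?thesis .
qed

lemma rearr3:
  assumes p: "pathin X M" "pathin X d" "pathin X R" "pathin X Q"
    and e: "M 1 = d 0" "d 1 = R 0" "R 1 = Q 0"
  shows "path_homotopic X (pjoin (pjoin M d) (pjoin R Q)) (pjoin M (pjoin (pjoin d R) Q))"
proof -
  have RQ: "pathin X (pjoin R Q)" using p e by (simp add: pathin_pjoin)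
  have "path_homotopic X (pjoin (pjoin M d) (pjoin R Q)) (pjoin M (pjoin d (pjoin R Q)))"
    by (rule ph_assoc[OF p(1,2) RQ]) (use e in simp_all)
  also have "path_homotopic X (pjoin M (pjoin d (pjoin R Q))) (pjoin M (pjoin (pjoin d R) Q))"
    by (rule ph_pjoin[OF ph_refl[OF p(1)] ph_assocI[OF p(2-4)]]) (use e in simp_all)
  finally show ?thesis .
qed

lemma pjoin_pathin_sub:
  assumes "pathin (subtopology X U) p" "pathin (subtopology X U) q" "p 1 = q 0"
  shows "pathin (subtopology X U) (pjoin p q)"
  using pathin_pjoin[OF assms] .


lemma cont_nbhd:
  assumes f: "continuous_map (prod_topology X X) X f" and U: "openin X U"
    and ab: "a \<in> topspace X" "b \<in> topspace X" "f (a,b) \<in> U"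
  shows "\<exists>U1 V1. openin X U1 \<and> openin X V1 \<and> a \<in> U1 \<and> b \<in> V1 \<and> (\<forall>x\<in>U1. \<forall>y\<in>V1. f (x,y) \<in> U)"
proof -
  define S where "S = {z \<in> topspace (prod_topology X X). f z \<in> U}"
  have o: "openin (prod_topology X X) S"
    unfolding S_def using continuous_map_def f U by fastforce
  have abS: "(a,b) \<in> S" using ab by (simp add: S_def)
  have "\<exists>U1 V1. openin X U1 \<and> openin X V1 \<and> a \<in> U1 \<and> b \<in> V1 \<and> U1 \<times> V1 \<subseteq> S"
    using o abS unfolding openin_prod_topology_alt by (elim allE impE)
  then obtain U1 V1 where U1: "openin X U1" "openin X V1" "a \<in> U1" "b \<in> V1" "U1 \<times> V1 \<subseteq> S"
    by blast
  have "f (x,y) \<in> U" if "x \<in> U1" "y \<in> V1" for x y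
  proof -
    have "(x,y) \<in> S" using U1(5) that by (simp add: subset_iff)
    then show ?thesis by (simp add: S_def)
  qed
  then show ?thesis using U1 by blast
qed

locale tgrp =
  fixes X :: "'a topology" and G :: "'a monoid" (structure)
  assumes TG: "topological_group X G"
begin

lemma grp: "group G" and carr: "carrier G = topspace X"
  and contm: "continuous_map (prod_topology X X) X (\<lambda>(x, y). x \<otimes>\<^bsub>G\<^esub> y)"
  and conti: "continuous_map X X (\<lambda>x. inv\<^bsub>G\<^esub> x)"
  using TG by (auto simp: topological_group_def)

sublocale group G by (rule grp)

lemma cm_mult:
  assumes "continuous_map Z X f" "continuous_map Z X g"
  shows "continuous_map Z X (\<lambda>z. f z \<otimes> g z)"
proof -
  have "continuous_map Z (prod_topology X X) (\<lambda>z. (f z, g z))"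
    using assms by (simp add: continuous_map_paired)
  from continuous_map_compose[OF this contm] show ?thesis by (simp add: o_def)
qed

lemma cm_inv:
  assumes "continuous_map Z X f"
  shows "continuous_map Z X (\<lambda>z. inv (f z))"
  using continuous_map_compose[OF assms conti] by (simp add: o_def)

lemma pathin_mult: "pathin X a \<Longrightarrow> pathin X b \<Longrightarrow> pathin X (\<lambda>t. a t \<otimes> b t)"
  unfolding pathin_def by (rule cm_mult)

lemma pathin_inv: "pathin X a \<Longrightarrow> pathin X (\<lambda>t. inv (a t))"
  unfolding pathin_def by (rule cm_inv)

lemma pathin_cst: "g \<in> carrier G \<Longrightarrow> pathin X (\<lambda>t. g)"
  by (simp add: carr)

lemma pin: "pathin X p \<Longrightarrow> t \<in> {0..1} \<Longrightarrow> p t \<in> carrier G"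
  using pathin_in carr by simp


lemma cont_mult2: "continuous_map (prod_topology X X) X (\<lambda>z. fst z \<otimes> snd z)"
  by (intro cm_mult continuous_map_fst continuous_map_snd)

lemma cont_div2: "continuous_map (prod_topology X X) X (\<lambda>z. fst z \<otimes> inv (snd z))"
  by (intro cm_mult cm_inv continuous_map_fst continuous_map_snd)

lemma mult_nbhd:
  assumes "openin X U" "a \<in> carrier G" "b \<in> carrier G" "a \<otimes> b \<in> U"
  shows "\<exists>U1 V1. openin X U1 \<and> openin X V1 \<and> a \<in> U1 \<and> b \<in> V1 \<and> (\<forall>x\<in>U1. \<forall>y\<in>V1. x \<otimes> y \<in> U)"
  using cont_nbhd[OF cont_mult2 assms(1), of a b] assms carr by simp

lemma div_nbhd:
  assumes "openin X U" "a \<in> carrier G" "b \<in> carrier G" "a \<otimes> inv b \<in> U"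
  shows "\<exists>U1 V1. openin X U1 \<and> openin X V1 \<and> a \<in> U1 \<and> b \<in> V1 \<and> (\<forall>x\<in>U1. \<forall>y\<in>V1. x \<otimes> inv y \<in> U)"
  using cont_nbhd[OF cont_div2 assms(1), of a b] assms carr by simp

lemma ph_mult:
  assumes "path_homotopic X a a'" "path_homotopic X b b'"
  shows "path_homotopic X (\<lambda>t. a t \<otimes> b t) (\<lambda>t. a' t \<otimes> b' t)"
proof -
  obtain h where h: "continuous_map (top_of_set SQ) X h" "\<And>t. h(0,t) = a t" "\<And>t. h(1,t) = a' t"
    "\<And>s. s \<in> {0..1} \<Longrightarrow> h(s,0) = a 0" "\<And>s. s \<in> {0..1} \<Longrightarrow> h(s,1) = a 1"
    using hom_extract[OF assms(1)] by blast
  obtain k where k: "continuous_map (top_of_set SQ) X k" "\<And>t. k(0,t) = b t" "\<And>t. k(1,t) = b' t"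
    "\<And>s. s \<in> {0..1} \<Longrightarrow> k(s,0) = b 0" "\<And>s. s \<in> {0..1} \<Longrightarrow> k(s,1) = b 1"
    using hom_extract[OF assms(2)] by blast
  show ?thesis
    by (rule ph_hom[where H="\<lambda>z. h z \<otimes> k z"]) (simp_all add: h k cm_mult[OF h(1) k(1)])
qed

lemma ph_inv:
  assumes "path_homotopic X a a'"
  shows "path_homotopic X (\<lambda>t. inv (a t)) (\<lambda>t. inv (a' t))"
proof -
  obtain h where h: "continuous_map (top_of_set SQ) X h" "\<And>t. h(0,t) = a t" "\<And>t. h(1,t) = a' t"
    "\<And>s. s \<in> {0..1} \<Longrightarrow> h(s,0) = a 0" "\<And>s. s \<in> {0..1} \<Longrightarrow> h(s,1) = a 1"
    using hom_extract[OF assms(1)] by blast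
  show ?thesis
    by (rule ph_hom[where H="\<lambda>z. inv (h z)"]) (simp_all add: h cm_inv[OF h(1)])
qed

lemma cm_fst: "pathin X p \<Longrightarrow> continuous_map (top_of_set SQ) X (\<lambda>z. p (fst z))"
  unfolding pathin_def
proof (rule cm_comp)
  show "continuous_on SQ fst" by (rule continuous_on_fst[OF continuous_on_id])
  show "fst ` SQ \<subseteq> {0..1}"
  proof (rule image_subsetI)
    fix x assume "x \<in> SQ" then show "fst x \<in> {0..1}" by (simp add: mem_Times_iff)
  qed
qed

lemma cm_snd: "pathin X p \<Longrightarrow> continuous_map (top_of_set SQ) X (\<lambda>z. p (snd z))"
  using pathin_SQ by blast

lemma ph_mult_join:
  assumes eta: "pathin X \<eta>" and gam: "pathin X \<gamma>" and e0: "\<eta> 0 = \<one>"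
  shows "path_homotopic X (\<lambda>t. \<eta> t \<otimes> \<gamma> t) (pjoin \<gamma> (\<lambda>t. \<eta> t \<otimes> \<gamma> 1))"
proof -
  have A: "path_homotopic X (pjoin (\<lambda>t. \<eta> 0) \<eta>) \<eta>" by (rule ph_lunit[OF eta])
  have B: "path_homotopic X (pjoin \<gamma> (\<lambda>t. \<gamma> 1)) \<gamma>" by (rule ph_runit[OF gam])
  have "path_homotopic X (\<lambda>t. \<eta> t \<otimes> \<gamma> t) (\<lambda>t. pjoin (\<lambda>t. \<eta> 0) \<eta> t \<otimes> pjoin \<gamma> (\<lambda>t. \<gamma> 1) t)"
    by (rule ph_sym, rule ph_mult[OF A B])
  moreover have "pjoin (\<lambda>t. \<eta> 0) \<eta> t \<otimes> pjoin \<gamma> (\<lambda>t. \<gamma> 1) t = pjoin \<gamma> (\<lambda>t. \<eta> t \<otimes> \<gamma> 1) t"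
    if "t \<in> {0..1}" for t
  proof (cases "t \<le> 1/2")
    case True
    then have "2*t \<in> {0..1}" using that by auto
    then have "\<gamma> (2*t) \<in> carrier G" using pin[OF gam] by blast
    then show ?thesis using True e0 by (simp add: pjoin_def)
  next
    case False
    then show ?thesis by (simp add: pjoin_def)
  qed
  ultimately show ?thesis by (rule ph_eqon_trans)
qed

lemma ph_inv_path:
  assumes gam: "pathin X \<gamma>" and e0: "\<gamma> 0 = \<one>"
  shows "path_homotopic X (\<lambda>t. inv (\<gamma> t) \<otimes> \<gamma> 1) (preverse \<gamma>)"
proof -
  define F where "F = (\<lambda>z::real\<times>real. inv (\<gamma> (fst z)) \<otimes> \<gamma> (snd z))"
  have F: "continuous_map (top_of_set SQ) X F"
    unfolding F_def by (intro cm_mult cm_inv cm_fst cm_snd gam)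
  define u where "u = (\<lambda>t::real. max 0 (2*t - 1))"
  define v where "v = (\<lambda>t::real. \<bar>2*t - 1\<bar>)"
  have "path_homotopic X (F \<circ> (\<lambda>t. (t, 1))) (F \<circ> (\<lambda>t. (u t, v t)))"
  proof (rule ph_square[OF F])
    show "continuous_on {0..1} (\<lambda>t. (u t, v t))" unfolding u_def v_def by (intro continuous_intros)
    show "continuous_on {0..1} (\<lambda>t::real. (t, 1::real))" by (intro continuous_intros)
    show "(\<lambda>t. (u t, v t)) ` {0..1} \<subseteq> SQ"
    proof (rule image_subsetI)
      fix t :: real assume "t \<in> {0..1}"
      then have "u t \<in> {0..1}" "v t \<in> {0..1}" unfolding u_def v_def by auto
      then show "(u t, v t) \<in> SQ" by simp
    qed
    show "(\<lambda>t::real. (t, 1::real)) ` {0..1} \<subseteq> SQ" by auto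
    show "(0::real, 1::real) = (u 0, v 0)" unfolding u_def v_def by simp
    show "(1::real, 1::real) = (u 1, v 1)" unfolding u_def v_def by simp
  qed
  then have h: "path_homotopic X (\<lambda>t. inv (\<gamma> t) \<otimes> \<gamma> 1) (\<lambda>t. F(u t, v t))"
    unfolding comp_def F_def by simp
  have "path_homotopic X (\<lambda>t. inv (\<gamma> t) \<otimes> \<gamma> 1) (pjoin (preverse \<gamma>) (\<lambda>t. preverse \<gamma> 1))"
  proof (rule ph_eqon_trans[OF h])
    fix t :: real assume t: "t \<in> {0..1}"
    show "F (u t, v t) = pjoin (preverse \<gamma>) (\<lambda>t. preverse \<gamma> 1) t"
    proof (cases "t \<le> 1/2")
      case True
      then have "u t = 0" "v t = 1 - 2*t" unfolding u_def v_def by auto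
      moreover have "\<gamma> (1 - 2*t) \<in> carrier G" using True t pin[OF gam] by auto
      ultimately show ?thesis using True e0 unfolding F_def pjoin_def preverse_def by simp
    next
      case False
      then have "u t = 2*t-1" "v t = 2*t - 1" unfolding u_def v_def by auto
      moreover have "\<gamma> (2*t - 1) \<in> carrier G" using False t pin[OF gam] by auto
      ultimately show ?thesis using False e0 unfolding F_def pjoin_def preverse_def by simp
    qed
  qed
  also have "path_homotopic X (pjoin (preverse \<gamma>) (\<lambda>t. preverse \<gamma> 1)) (preverse \<gamma>)"
    by (rule ph_runit[OF pathin_preverse[OF gam]])
  finally show ?thesis .
qed


lemma ph_rmul:
  assumes "path_homotopic X a b" "g \<in> carrier G"
  shows "path_homotopic X (\<lambda>t. a t \<otimes> g) (\<lambda>t. b t \<otimes> g)"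
  using ph_mult[OF assms(1) ph_refl[OF pathin_cst[OF assms(2)]]] .

lemma pjoin_rmul: "(\<lambda>t. pjoin a b t \<otimes> g) = pjoin (\<lambda>t. a t \<otimes> g) (\<lambda>t. b t \<otimes> g)"
  by (auto simp: pjoin_def fun_eq_iff)

lemma preverse_rmul: "(\<lambda>t. preverse a t \<otimes> g) = preverse (\<lambda>t. a t \<otimes> g)"
  by (auto simp: preverse_def fun_eq_iff)

lemma ph_conj:
  assumes gam: "pathin X \<gamma>" and e0: "\<gamma> 0 = \<one>" and sig: "pathin X \<sigma>"
  shows "path_homotopic X (\<lambda>t. \<gamma> t \<otimes> \<sigma> 1)
           (pjoin (pjoin (preverse \<sigma>) (\<lambda>t. \<gamma> t \<otimes> \<sigma> 0)) (\<lambda>t. \<gamma> 1 \<otimes> \<sigma> t))"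
proof -
  define F where "F = (\<lambda>z::real\<times>real. \<gamma> (fst z) \<otimes> preverse \<sigma> (snd z))"
  have F: "continuous_map (top_of_set SQ) X F"
    unfolding F_def by (intro cm_mult cm_fst cm_snd gam pathin_preverse sig)
  have h: "path_homotopic X (\<lambda>t. F(t,0)) (pjoin (pjoin (\<lambda>t. F(0,t)) (\<lambda>t. F(t,1))) (\<lambda>t. F(1,1-t)))"
    by (rule ph_boundary[OF F])
  have "(\<lambda>t. F(t,0)) = (\<lambda>t. \<gamma> t \<otimes> \<sigma> 1)" by (simp add: F_def preverse_def)
  with h have h': "path_homotopic X (\<lambda>t. \<gamma> t \<otimes> \<sigma> 1) (pjoin (pjoin (\<lambda>t. F(0,t)) (\<lambda>t. F(t,1))) (\<lambda>t. F(1,1-t)))"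
    by simp
  show ?thesis
  proof (rule ph_eqon_trans[OF h'])
    fix t :: real assume t: "t \<in> {0..1}"
    have i1: "F(0,u) = preverse \<sigma> u" if "u \<in> {0..1}" for u
    proof -
      have "\<sigma> (1 - u) \<in> carrier G" using that pin[OF sig] by simp
      then show ?thesis using e0 by (simp add: F_def preverse_def)
    qed
    have i2: "F(u,1) = \<gamma> u \<otimes> \<sigma> 0" for u by (simp add: F_def preverse_def)
    have i3: "F(1,1-u) = \<gamma> 1 \<otimes> \<sigma> u" for u by (simp add: F_def preverse_def)
    have "pjoin (\<lambda>t. F(0,t)) (\<lambda>t. F(t,1)) u = pjoin (preverse \<sigma>) (\<lambda>t. \<gamma> t \<otimes> \<sigma> 0) u"
      if "u \<in> {0..1}" for u
      by (rule pjoin_eqon[OF _ _ that]) (simp_all add: i1 i2)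
    then show "pjoin (pjoin (\<lambda>t. F(0,t)) (\<lambda>t. F(t,1))) (\<lambda>t. F(1,1-t)) t =
               pjoin (pjoin (preverse \<sigma>) (\<lambda>t. \<gamma> t \<otimes> \<sigma> 0)) (\<lambda>t. \<gamma> 1 \<otimes> \<sigma> t) t"
      by (rule pjoin_eqon[OF _ _ t]) (simp_all add: i3)
  qed
qed

lemma ph_shift:
  assumes "pathin X \<alpha>" "pathin X \<theta>"
  shows "path_homotopic X (\<lambda>t. \<alpha> t \<otimes> inv (\<theta> 0))
     (pjoin (pjoin (\<lambda>t. \<alpha> 0 \<otimes> inv (\<theta> t)) (\<lambda>t. \<alpha> t \<otimes> inv (\<theta> 1))) (\<lambda>t. \<alpha> 1 \<otimes> inv (\<theta> (1-t))))"
proof -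
  have F: "continuous_map (top_of_set SQ) X (\<lambda>z. \<alpha> (fst z) \<otimes> inv (\<theta> (snd z)))"
    by (intro cm_mult cm_inv cm_fst cm_snd assms)
  show ?thesis using ph_boundary[OF F] by simp
qed

end


locale mainctx = tgrp +
  assumes lpc: "locally_path_connected_space X" and sl: "semilocally_simply_connected X"
begin

abbreviation "FG \<equiv> fundamental_groupoid X"
abbreviation "HH \<equiv> ucg_carrier X G"
abbreviation "J \<equiv> J_map X G"

definition Kmap :: "(real \<Rightarrow> 'a) set \<Rightarrow> (real \<Rightarrow> 'a) set \<times> 'a" where
  "Kmap d = (path_class X (\<lambda>t. rep d t \<otimes> inv (rep d 0)), rep d 0)"

lemma HH_FG: "c \<in> HH \<Longrightarrow> c \<in> FG" and HH_0: "c \<in> HH \<Longrightarrow> rep c 0 = \<one>"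
  by (auto simp: ucg_carrier_def pg_source_def)

lemma HH_I: "pathin X p \<Longrightarrow> p 0 = \<one> \<Longrightarrow> path_class X p \<in> HH"
  by (simp add: ucg_carrier_def FG_I pg_source_pc)

lemma repP: "c \<in> FG \<Longrightarrow> pathin X (rep c)" by (rule rep_pathin)

lemma rep_in: "c \<in> FG \<Longrightarrow> t \<in> {0..1} \<Longrightarrow> rep c t \<in> carrier G"
  by (rule pin[OF rep_pathin])

lemma J_path: "c \<in> FG \<Longrightarrow> g \<in> carrier G \<Longrightarrow> pathin X (\<lambda>t. rep c t \<otimes> g)"
  by (intro pathin_mult rep_pathin pathin_cst)

lemma J_eq: "J (c,g) = path_class X (\<lambda>t. rep c t \<otimes> g)"
  by (simp add: J_map_def)

lemma J_FG: "c \<in> FG \<Longrightarrow> g \<in> carrier G \<Longrightarrow> J (c,g) \<in> FG"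
  unfolding J_eq by (intro FG_I J_path)

lemma J_source:
  assumes c: "c \<in> HH" and g: "g \<in> carrier G" shows "pg_source (J (c,g)) = g"
proof -
  have p: "pathin X (\<lambda>t. rep c t \<otimes> g)" by (rule J_path[OF HH_FG[OF c] g])
  show ?thesis unfolding J_eq using pg_source_pc[OF p] HH_0[OF c] g by simp
qed

lemma J_range:
  assumes c: "c \<in> FG" and g: "g \<in> carrier G" shows "pg_range (J (c,g)) = rep c 1 \<otimes> g"
proof -
  have p: "pathin X (\<lambda>t. rep c t \<otimes> g)" by (rule J_path[OF c g])
  show ?thesis unfolding J_eq using pg_range_pc[OF p] by simp
qed

lemma J_rep:
  assumes c: "c \<in> FG" and g: "g \<in> carrier G"
  shows "path_homotopic X (rep (J (c,g))) (\<lambda>t. rep c t \<otimes> g)"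
proof -
  have p: "pathin X (\<lambda>t. rep c t \<otimes> g)" by (rule J_path[OF c g])
  show ?thesis unfolding J_eq by (rule ph_sym[OF rep_ph[OF p]])
qed

lemma topspace_ucg: "topspace (ucg_topology X G) = HH"
proof -
  have "HH \<subseteq> FG" using HH_FG by blast
  then show ?thesis unfolding ucg_topology_def topspace_subtopology topspace_uc[OF lpc sl] by blast
qed

lemma topspace_T: "topspace (tg_topology X G) = HH \<times> carrier G"
  unfolding tg_topology_def by (simp add: topspace_ucg carr)

lemma KJ:
  assumes c: "c \<in> HH" and g: "g \<in> carrier G"
  shows "Kmap (J (c,g)) = (c,g)"
proof -
  have cF: "c \<in> FG" using c by (rule HH_FG)
  let ?b = "rep (J (c,g))"
  have hb: "path_homotopic X ?b (\<lambda>t. rep c t \<otimes> g)" by (rule J_rep[OF cF g])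
  have b0: "?b 0 = g" using ph_ends0[OF hb] HH_0[OF c] g by simp
  have "path_class X (\<lambda>t. ?b t \<otimes> inv g) = path_class X (\<lambda>t. (rep c t \<otimes> g) \<otimes> inv g)"
    by (rule pc_eq, rule ph_rmul[OF hb]) (use g in simp)
  also have "\<dots> = path_class X (rep c)"
  proof (rule pc_eq, rule ph_eqon)
    show "pathin X (\<lambda>t. (rep c t \<otimes> g) \<otimes> inv g)" using g cF by (intro pathin_mult J_path pathin_cst) auto
    show "(rep c t \<otimes> g) \<otimes> inv g = rep c t" if "t \<in> {0..1}" for t
      using rep_in[OF cF that] g by (simp add: m_assoc)
  qed
  also have "\<dots> = c" by (rule pc_rep[OF cF])
  finally show ?thesis by (simp add: Kmap_def b0)
qed

lemma K_in:
  assumes d: "d \<in> FG"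
  shows "Kmap d \<in> HH \<times> carrier G"
proof -
  have a: "rep d 0 \<in> carrier G" using rep_in[OF d] by simp
  have "path_class X (\<lambda>t. rep d t \<otimes> inv (rep d 0)) \<in> HH"
    by (rule HH_I) (use d a in \<open>simp_all add: J_path\<close>)
  then show ?thesis using a by (simp add: Kmap_def)
qed

lemma JK:
  assumes d: "d \<in> FG"
  shows "J (Kmap d) = d"
proof -
  let ?a = "rep d 0"
  have a: "?a \<in> carrier G" using rep_in[OF d] by simp
  let ?c = "path_class X (\<lambda>t. rep d t \<otimes> inv ?a)"
  have p: "pathin X (\<lambda>t. rep d t \<otimes> inv ?a)" using d a by (simp add: J_path)
  have cF: "?c \<in> FG" using p by (rule FG_I)
  have "J (Kmap d) = path_class X (\<lambda>t. rep ?c t \<otimes> ?a)" by (simp add: Kmap_def J_eq)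
  also have "\<dots> = path_class X (\<lambda>t. (rep d t \<otimes> inv ?a) \<otimes> ?a)"
    by (rule pc_eq, rule ph_rmul[OF ph_sym[OF rep_ph[OF p]] a])
  also have "\<dots> = path_class X (rep d)"
  proof (rule pc_eq, rule ph_eqon)
    show "pathin X (\<lambda>t. (rep d t \<otimes> inv ?a) \<otimes> ?a)" by (rule pathin_mult[OF p pathin_cst[OF a]])
    show "(rep d t \<otimes> inv ?a) \<otimes> ?a = rep d t" if "t \<in> {0..1}" for t
      using rep_in[OF d that] a by (simp add: m_assoc)
  qed
  also have "\<dots> = d" by (rule pc_rep[OF d])
  finally show ?thesis .
qed

lemma J_mult:
  assumes x: "fst x \<in> HH" "snd x \<in> carrier G" and y: "fst y \<in> HH" "snd y \<in> carrier G"
    and comp: "tg_source x = tg_range G y"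
  shows "J (tg_mult X G x y) = pg_mult X (J x) (J y)"
proof -
  obtain \<eta> h where xe: "x = (\<eta>, h)" by (cases x)
  obtain \<gamma> g where ye: "y = (\<gamma>, g)" by (cases y)
  have eF: "\<eta> \<in> FG" and gF: "\<gamma> \<in> FG" using x y xe ye HH_FG by auto
  have hc: "h \<in> carrier G" and gc: "g \<in> carrier G" using x y xe ye by auto
  have h: "h = rep \<gamma> 1 \<otimes> g" using comp xe ye by (simp add: tg_source_def tg_range_def ucg_proj_def)
  have e0: "rep \<eta> 0 = \<one>" using x xe HH_0 by auto
  let ?e = "rep \<eta>" and ?g = "rep \<gamma>"
  have pe: "pathin X ?e" and pg: "pathin X ?g" using eF gF by (simp_all add: rep_pathin)
  have g1: "?g 1 \<in> carrier G" using rep_in[OF gF] by simp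
  have pm: "pathin X (\<lambda>t. ?e t \<otimes> ?g t)" using pe pg by (rule pathin_mult)
  have "J (tg_mult X G x y) = path_class X (\<lambda>t. rep (path_class X (\<lambda>t. ?e t \<otimes> ?g t)) t \<otimes> g)"
    by (simp add: xe ye tg_mult_def ucg_mult_def J_eq)
  also have "\<dots> = path_class X (\<lambda>t. (?e t \<otimes> ?g t) \<otimes> g)"
    by (rule pc_eq, rule ph_rmul[OF ph_sym[OF rep_ph[OF pm]] gc])
  also have "\<dots> = path_class X (pjoin (\<lambda>t. ?g t \<otimes> g) (\<lambda>t. ?e t \<otimes> h))"
  proof (rule pc_eq)
    have "path_homotopic X (\<lambda>t. (?e t \<otimes> ?g t) \<otimes> g) (\<lambda>t. pjoin ?g (\<lambda>t. ?e t \<otimes> ?g 1) t \<otimes> g)"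
      by (rule ph_rmul[OF ph_mult_join[OF pe pg e0] gc])
    moreover have "pjoin ?g (\<lambda>t. ?e t \<otimes> ?g 1) t \<otimes> g = pjoin (\<lambda>t. ?g t \<otimes> g) (\<lambda>t. ?e t \<otimes> h) t"
      if "t \<in> {0..1}" for t
    proof -
      have "pjoin ?g (\<lambda>t. ?e t \<otimes> ?g 1) t \<otimes> g = pjoin (\<lambda>t. ?g t \<otimes> g) (\<lambda>t. (?e t \<otimes> ?g 1) \<otimes> g) t"
        by (simp add: pjoin_def)
      also have "\<dots> = pjoin (\<lambda>t. ?g t \<otimes> g) (\<lambda>t. ?e t \<otimes> h) t"
        by (rule pjoin_eqon[OF _ _ that]) (use rep_in[OF eF] g1 gc h in \<open>simp_all add: m_assoc\<close>)
      finally show ?thesis .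
    qed
    ultimately show "path_homotopic X (\<lambda>t. (?e t \<otimes> ?g t) \<otimes> g) (pjoin (\<lambda>t. ?g t \<otimes> g) (\<lambda>t. ?e t \<otimes> h))"
      by (rule ph_eqon_trans)
  qed
  also have "\<dots> = path_class X (pjoin (rep (J y)) (rep (J x)))"
  proof (rule pc_eq, rule ph_pjoin)
    show "path_homotopic X (\<lambda>t. ?g t \<otimes> g) (rep (J y))" using J_rep[OF gF gc] ye by (simp add: ph_sym)
    show "path_homotopic X (\<lambda>t. ?e t \<otimes> h) (rep (J x))" using J_rep[OF eF hc] xe by (simp add: ph_sym)
    show "?g 1 \<otimes> g = ?e 0 \<otimes> h" using e0 h hc by simp
  qed
  also have "\<dots> = pg_mult X (J x) (J y)" by (simp add: pg_mult_def)
  finally show ?thesis .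
qed

lemma J_inv:
  assumes x: "fst x \<in> HH" "snd x \<in> carrier G"
  shows "J (tg_inv X G x) = pg_inv X (J x)"
proof -
  obtain \<gamma> g where xe: "x = (\<gamma>, g)" by (cases x)
  have gF: "\<gamma> \<in> FG" using x xe HH_FG by auto
  have gc: "g \<in> carrier G" using x xe by auto
  have e0: "rep \<gamma> 0 = \<one>" using x xe HH_0 by auto
  let ?g = "rep \<gamma>"
  have pg: "pathin X ?g" using gF by (simp add: rep_pathin)
  have g1: "?g 1 \<in> carrier G" using rep_in[OF gF] by simp
  have pi: "pathin X (\<lambda>t. inv (?g t))" using pg by (rule pathin_inv)
  have "J (tg_inv X G x) = path_class X (\<lambda>t. rep (path_class X (\<lambda>t. inv (?g t))) t \<otimes> (?g 1 \<otimes> g))"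
    by (simp add: xe tg_inv_def ucg_inv_def J_eq ucg_proj_def)
  also have "\<dots> = path_class X (\<lambda>t. inv (?g t) \<otimes> (?g 1 \<otimes> g))"
    by (rule pc_eq, rule ph_rmul[OF ph_sym[OF rep_ph[OF pi]]]) (use g1 gc in simp)
  also have "\<dots> = path_class X (\<lambda>t. (inv (?g t) \<otimes> ?g 1) \<otimes> g)"
  proof (rule pc_eq, rule ph_eqon)
    show "pathin X (\<lambda>t. inv (?g t) \<otimes> (?g 1 \<otimes> g))" using pi g1 gc by (intro pathin_mult pathin_cst) auto
    show "inv (?g t) \<otimes> (?g 1 \<otimes> g) = (inv (?g t) \<otimes> ?g 1) \<otimes> g" if "t \<in> {0..1}" for t
      using rep_in[OF gF that] g1 gc by (simp add: m_assoc)
  qed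
  also have "\<dots> = path_class X (\<lambda>t. preverse ?g t \<otimes> g)"
    by (rule pc_eq, rule ph_rmul[OF ph_inv_path[OF pg e0] gc])
  also have "\<dots> = path_class X (preverse (\<lambda>t. ?g t \<otimes> g))" by (simp add: preverse_rmul)
  also have "\<dots> = path_class X (preverse (rep (J x)))"
    by (rule pc_eq, rule ph_preverse) (use J_rep[OF gF gc] xe in \<open>simp add: ph_sym\<close>)
  also have "\<dots> = pg_inv X (J x)" by (simp add: pg_inv_def)
  finally show ?thesis .
qed


lemma good_open: "good X U \<Longrightarrow> openin X U"
  and good_pc: "good X U \<Longrightarrow> path_connectedin X U"
  and good_null: "good X U \<Longrightarrow> x \<in> U \<Longrightarrow> null_loop_at X U x"
  and good_sub: "good X U \<Longrightarrow> U \<subseteq> carrier G"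
  by (auto simp: good_def relatively_inessential_def carr)

lemma good_exists: "openin X W \<Longrightarrow> x \<in> W \<Longrightarrow> \<exists>U. good X U \<and> x \<in> U \<and> U \<subseteq> W"
  by (rule good_nbhd[OF lpc sl])

lemma path_in_good:
  assumes "good X Ob" "g \<in> Ob" "g' \<in> Ob"
  obtains \<sigma> where "pathin (subtopology X Ob) \<sigma>" "\<sigma> 0 = g" "\<sigma> 1 = g'"
proof -
  obtain \<sigma> where "pathin X \<sigma>" "\<sigma> \<in> {0..1} \<rightarrow> Ob" "\<sigma> 0 = g" "\<sigma> 1 = g'"
    using good_pc[OF assms(1)] assms(2,3) unfolding path_connectedin by blast
  then show ?thesis using that by (auto simp: pathin_subtopology)
qed

lemma subpath_in: "pathin (subtopology X U) p \<Longrightarrow> t \<in> {0..1} \<Longrightarrow> p t \<in> U"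
  by (simp add: pathin_subtopology)

lemma subpath_X: "pathin (subtopology X U) p \<Longrightarrow> pathin X p"
  by (simp add: pathin_subtopology)

lemma J_local:
  assumes d: "d \<in> FG" and U: "good X U" and V: "good X V"
    and c: "c \<in> HH" and g: "g \<in> carrier G" and Jin: "J (c,g) \<in> uc_nbhd X d U V"
  shows "\<exists>W. openin (tg_topology X G) W \<and> (c,g) \<in> W \<and>
             W \<subseteq> {x \<in> topspace (tg_topology X G). J x \<in> uc_nbhd X d U V}"
proof -
  have cF: "c \<in> FG" using c by (rule HH_FG)
  let ?\<gamma> = "rep c" and ?\<rho> = "rep d"
  have pga: "pathin X ?\<gamma>" using cF by (rule rep_pathin)
  have prho: "pathin X ?\<rho>" using d by (rule rep_pathin)
  have ga0: "?\<gamma> 0 = \<one>" using c by (rule HH_0)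
  have ga1: "?\<gamma> 1 \<in> carrier G" using rep_in[OF cF] by simp
  obtain \<delta> \<theta> where dt: "J (c,g) = path_class X (pjoin (pjoin \<theta> ?\<rho>) \<delta>)"
    "pathin (subtopology X U) \<delta>" "\<delta> 0 = pg_range d"
    "pathin (subtopology X V) \<theta>" "\<theta> 1 = pg_source d"
    using Jin by (rule uc_nbhd_E)
  have pdel: "pathin X \<delta>" and pth: "pathin X \<theta>" using dt subpath_X by blast+
  have hJ: "path_homotopic X (\<lambda>t. ?\<gamma> t \<otimes> g) (pjoin (pjoin \<theta> ?\<rho>) \<delta>)"
    using pc_eqD[OF J_path[OF cF g]] dt(1) by (simp add: J_eq)
  have th0: "\<theta> 0 = g" using ph_ends0[OF hJ] ga0 g by simp
  have de1: "\<delta> 1 = ?\<gamma> 1 \<otimes> g" using ph_ends1[OF hJ] by simp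
  have de1U: "?\<gamma> 1 \<otimes> g \<in> U" using subpath_in[OF dt(2), of 1] de1 by simp
  have gV: "g \<in> V" using subpath_in[OF dt(4), of 0] th0 by simp
  obtain U1 V1 where UV1: "openin X U1" "openin X V1" "?\<gamma> 1 \<in> U1" "g \<in> V1"
    "\<And>x y. x \<in> U1 \<Longrightarrow> y \<in> V1 \<Longrightarrow> x \<otimes> y \<in> U"
    using mult_nbhd[OF good_open[OF U] ga1 g de1U] by blast
  obtain U' where U': "good X U'" "?\<gamma> 1 \<in> U'" "U' \<subseteq> U1"
    using good_exists[OF UV1(1,3)] by blast
  have "openin X (V1 \<inter> V)" using UV1(2) good_open[OF V] by blast
  then obtain Ob where Ob: "good X Ob" "g \<in> Ob" "Ob \<subseteq> V1 \<inter> V"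
    using good_exists[of "V1 \<inter> V" g] UV1(4) gV by blast
  have one_top: "\<one> \<in> topspace X" using carr by auto
  obtain V'' where V'': "good X V''" "\<one> \<in> V''"
    using good_exists[OF openin_topspace one_top] by blast
  let ?N = "uc_nbhd X c U' V''"
  have rc: "pg_range c \<in> U'" using U'(2) by (simp add: pg_range_def)
  have sc: "pg_source c \<in> V''" using V''(2) ga0 by (simp add: pg_source_def)
  have cN: "c \<in> ?N" and NB: "?N \<in> uc_basis X" using uc_self[OF cF U'(1) rc V''(1) sc] by auto
  define W where "W = (?N \<inter> HH) \<times> Ob"
  have oW: "openin (tg_topology X G) W"
  proof -
    have "openin (ucg_topology X G) (?N \<inter> HH)"
      unfolding ucg_topology_def by (rule openin_subtopology_Int[OF openin_uc_basis[OF NB]])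
    then show ?thesis unfolding W_def tg_topology_def
      using good_open[OF Ob(1)] by (simp add: openin_prod_Times_iff)
  qed
  have cgW: "(c,g) \<in> W" using cN c Ob(2) by (simp add: W_def)
  have "W \<subseteq> {x \<in> topspace (tg_topology X G). J x \<in> uc_nbhd X d U V}"
  proof
    fix x assume "x \<in> W"
    then obtain c' g' where x: "x = (c',g')" "c' \<in> ?N" "c' \<in> HH" "g' \<in> Ob"
      unfolding W_def by blast
    have g'c: "g' \<in> carrier G" using good_sub[OF Ob(1)] x(4) by blast
    have c'F: "c' \<in> FG" using x(3) by (rule HH_FG)
    obtain \<delta>' \<theta>' where dt': "c' = path_class X (pjoin (pjoin \<theta>' ?\<gamma>) \<delta>')"
      "pathin (subtopology X U') \<delta>'" "\<delta>' 0 = pg_range c"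
      "pathin (subtopology X V'') \<theta>'" "\<theta>' 1 = pg_source c"
      using x(2) by (rule uc_nbhd_E)
    have pdel': "pathin X \<delta>'" and pth': "pathin X \<theta>'" using dt' subpath_X by blast+
    have de0': "\<delta>' 0 = ?\<gamma> 1" using dt'(3) by (simp add: pg_range_def)
    have th1': "\<theta>' 1 = \<one>" using dt'(5) ga0 by (simp add: pg_source_def)
    define P' where "P' = pjoin (pjoin \<theta>' ?\<gamma>) \<delta>'"
    have pP': "pathin X P'" unfolding P'_def
      using pdel' pth' pga th1' ga0 de0' by (intro pathin_pjoin) auto
    have "pg_source c' = \<one>" using x(3) by (simp add: ucg_carrier_def)
    then have th0': "\<theta>' 0 = \<one>" using pg_source_pc[OF pP'] dt'(1) by (simp add: P'_def)
    have nullt: "path_homotopic X \<theta>' (\<lambda>t. \<one>)"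
      using good_null[OF V''] V''(2) dt'(4) th0' th1' unfolding null_loop_at_def by blast
    obtain \<sigma> where sig: "pathin (subtopology X Ob) \<sigma>" "\<sigma> 0 = g" "\<sigma> 1 = g'"
      using path_in_good[OF Ob(1,2) x(4)] by blast
    have psig: "pathin X \<sigma>" using sig subpath_X by blast
    define r where "r = preverse \<sigma>"
    define s where "s = (\<lambda>t. ?\<gamma> 1 \<otimes> \<sigma> t)"
    define v where "v = (\<lambda>t. \<delta>' t \<otimes> g')"
    define M where "M = pjoin (pjoin \<theta> ?\<rho>) \<delta>"
    have pr: "pathin X r" unfolding r_def by (rule pathin_preverse[OF psig])
    have ps: "pathin X s" unfolding s_def by (rule pathin_mult[OF pathin_cst[OF ga1] psig])
    have pv: "pathin X v" unfolding v_def by (rule pathin_mult[OF pdel' pathin_cst[OF g'c]])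
    have the1: "\<theta> 1 = ?\<rho> 0" using dt(5) by (simp add: pg_source_def)
    have rho1: "?\<rho> 1 = \<delta> 0" using dt(3) by (simp add: pg_range_def)
    have "path_homotopic X (\<lambda>t. rep c' t \<otimes> g') (\<lambda>t. P' t \<otimes> g')"
      using ph_rmul[OF ph_sym[OF rep_ph[OF pP']] g'c] dt'(1) by (simp add: P'_def)
    also have "path_homotopic X (\<lambda>t. P' t \<otimes> g') (\<lambda>t. pjoin ?\<gamma> \<delta>' t \<otimes> g')"
    proof (rule ph_rmul[OF _ g'c])
      have "path_homotopic X P' (pjoin (pjoin (\<lambda>t. ?\<gamma> 0) ?\<gamma>) \<delta>')"
        unfolding P'_def
        by (rule ph_pjoin[OF ph_pjoin[OF nullt[folded ga0] ph_refl[OF pga]] ph_refl[OF pdel']]) (simp_all add: th1' ga0 de0')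
      also have "path_homotopic X (pjoin (pjoin (\<lambda>t. ?\<gamma> 0) ?\<gamma>) \<delta>') (pjoin ?\<gamma> \<delta>')"
        by (rule ph_pjoin[OF ph_lunit[OF pga] ph_refl[OF pdel']]) (simp add: de0')
      finally show "path_homotopic X P' (pjoin ?\<gamma> \<delta>')" .
    qed
    also have "(\<lambda>t. pjoin ?\<gamma> \<delta>' t \<otimes> g') = pjoin (\<lambda>t. ?\<gamma> t \<otimes> g') v"
      by (simp add: pjoin_rmul v_def)
    also have "path_homotopic X (pjoin (\<lambda>t. ?\<gamma> t \<otimes> g') v) (pjoin (pjoin (pjoin r (\<lambda>t. ?\<gamma> t \<otimes> g)) s) v)"
    proof (rule ph_pjoin[OF _ ph_refl[OF pv]])
      show "path_homotopic X (\<lambda>t. ?\<gamma> t \<otimes> g') (pjoin (pjoin r (\<lambda>t. ?\<gamma> t \<otimes> g)) s)"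
        using ph_conj[OF pga ga0 psig] sig(2,3) by (simp add: r_def s_def)
      show "?\<gamma> 1 \<otimes> g' = v 0" by (simp add: v_def de0')
    qed
    also have "path_homotopic X (pjoin (pjoin (pjoin r (\<lambda>t. ?\<gamma> t \<otimes> g)) s) v) (pjoin (pjoin (pjoin r M) s) v)"
      by (rule ph_pjoin[OF ph_pjoin[OF ph_pjoin[OF ph_refl[OF pr] hJ[folded M_def]] ph_refl[OF ps]] ph_refl[OF pv]])
         (simp_all add: r_def s_def v_def M_def sig ga0 g de1 de0')
    also have "path_homotopic X (pjoin (pjoin (pjoin r M) s) v) (pjoin (pjoin (pjoin r \<theta>) ?\<rho>) (pjoin (pjoin \<delta> s) v))"
      unfolding M_def
      by (rule rearr1[OF pr pth prho pdel ps pv]) (simp_all add: r_def s_def v_def sig th0 the1 rho1 de1 de0')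
    finally have hh: "path_homotopic X (\<lambda>t. rep c' t \<otimes> g') (pjoin (pjoin (pjoin r \<theta>) ?\<rho>) (pjoin (pjoin \<delta> s) v))" .
    have sU: "pathin (subtopology X U) s"
    proof -
      have "s t \<in> U" if "t \<in> {0..1}" for t
        unfolding s_def using UV1(5) U'(2,3) Ob(3) subpath_in[OF sig(1) that] by blast
      then show ?thesis using ps by (simp add: pathin_subtopology)
    qed
    have vU: "pathin (subtopology X U) v"
    proof -
      have "v t \<in> U" if "t \<in> {0..1}" for t
        unfolding v_def using UV1(5) U'(3) Ob(3) x(4) subpath_in[OF dt'(2) that] by blast
      then show ?thesis using pv by (simp add: pathin_subtopology)
    qed
    have rV: "pathin (subtopology X V) r"
    proof -
      have "r t \<in> V" if "t \<in> {0..1}" for t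
        unfolding r_def preverse_def using Ob(3) subpath_in[OF sig(1), of "1-t"] that by auto
      then show ?thesis using pr by (simp add: pathin_subtopology)
    qed
    have d2: "pathin (subtopology X U) (pjoin (pjoin \<delta> s) v)"
      by (intro pathin_pjoin dt(2) sU vU) (simp_all add: s_def v_def sig de1 de0')
    have t2: "pathin (subtopology X V) (pjoin r \<theta>)"
      by (intro pathin_pjoin dt(4) rV) (simp add: r_def sig th0)
    have "path_class X (\<lambda>t. rep c' t \<otimes> g') \<in> uc_nbhd X d U V"
      by (rule uc_nbhd_I[OF d2 _ t2 _ ph_sym[OF hh]]) (simp_all add: dt(3) dt(5))
    then have "J x \<in> uc_nbhd X d U V" by (simp add: x J_eq)
    moreover have "x \<in> topspace (tg_topology X G)" using x(3) g'c by (simp add: topspace_T x)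
    ultimately show "x \<in> {x \<in> topspace (tg_topology X G). J x \<in> uc_nbhd X d U V}" by blast
  qed
  then show ?thesis using oW cgW by blast
qed


lemma UB: "\<Union>(uc_basis X) = FG"
  using topspace_uc[OF lpc sl] unfolding uc_topology_def by simp

lemma cont_into_uc:
  assumes "f \<in> topspace T \<rightarrow> FG" "\<And>B. B \<in> uc_basis X \<Longrightarrow> openin T {x \<in> topspace T. f x \<in> B}"
  shows "continuous_map T (uc_topology X) f"
  unfolding uc_topology_def by (rule continuous_map_generated) (use assms UB in auto)

lemma basis_E:
  assumes "B \<in> uc_basis X"
  obtains d U V where "B = uc_nbhd X d U V" "d \<in> FG" "good X U" "good X V"
  using assms unfolding uc_basis_def good_def by blast

lemma J_cont: "continuous_map (tg_topology X G) (uc_topology X) J"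
proof (rule cont_into_uc)
  show "J \<in> topspace (tg_topology X G) \<rightarrow> FG"
  proof
    fix x assume "x \<in> topspace (tg_topology X G)"
    then obtain c g where "x = (c,g)" "c \<in> HH" "g \<in> carrier G" by (auto simp: topspace_T)
    then show "J x \<in> FG" using J_FG HH_FG by simp
  qed
  fix B assume "B \<in> uc_basis X"
  then obtain d U V where B: "B = uc_nbhd X d U V" "d \<in> FG" "good X U" "good X V"
    by (rule basis_E)
  show "openin (tg_topology X G) {x \<in> topspace (tg_topology X G). J x \<in> B}"
  proof (subst openin_subopen, intro ballI)
    fix x assume x: "x \<in> {x \<in> topspace (tg_topology X G). J x \<in> B}"
    then obtain c g where cg: "x = (c,g)" "c \<in> HH" "g \<in> carrier G" by (auto simp: topspace_T)
    have "J (c,g) \<in> uc_nbhd X d U V" using x cg B by simp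
    from J_local[OF B(2,3,4) cg(2,3) this]
    show "\<exists>T. openin (tg_topology X G) T \<and> x \<in> T \<and> T \<subseteq> {x \<in> topspace (tg_topology X G). J x \<in> B}"
      using cg B by blast
  qed
qed

lemma K1_local:
  assumes d: "d \<in> FG" and e: "e \<in> FG" and U': "good X U'" and V': "good X V'"
    and Kin: "fst (Kmap d) \<in> uc_nbhd X e U' V'"
  shows "\<exists>N. openin (uc_topology X) N \<and> d \<in> N \<and>
             N \<subseteq> {d' \<in> topspace (uc_topology X). fst (Kmap d') \<in> uc_nbhd X e U' V'}"
proof -
  let ?\<alpha> = "rep d" and ?\<rho> = "rep e"
  let ?a = "?\<alpha> 0" and ?b = "?\<alpha> 1"
  have pal: "pathin X ?\<alpha>" using d by (rule rep_pathin)
  have prho: "pathin X ?\<rho>" using e by (rule rep_pathin)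
  have ac: "?a \<in> carrier G" and bc: "?b \<in> carrier G" using rep_in[OF d] by auto
  have pT: "pathin X (\<lambda>t. ?\<alpha> t \<otimes> inv ?a)" using pal ac by (intro pathin_mult pathin_cst) auto
  obtain \<delta>0 \<theta>0 where dt: "fst (Kmap d) = path_class X (pjoin (pjoin \<theta>0 ?\<rho>) \<delta>0)"
    "pathin (subtopology X U') \<delta>0" "\<delta>0 0 = pg_range e"
    "pathin (subtopology X V') \<theta>0" "\<theta>0 1 = pg_source e"
    using Kin by (rule uc_nbhd_E)
  have pdel0: "pathin X \<delta>0" and pth0: "pathin X \<theta>0" using dt subpath_X by blast+
  have hT: "path_homotopic X (\<lambda>t. ?\<alpha> t \<otimes> inv ?a) (pjoin (pjoin \<theta>0 ?\<rho>) \<delta>0)"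
    using pc_eqD[OF pT] dt(1) by (simp add: Kmap_def)
  have th00: "\<theta>0 0 = \<one>" using ph_ends0[OF hT] ac by simp
  have de01: "\<delta>0 1 = ?b \<otimes> inv ?a" using ph_ends1[OF hT] by simp
  have baU: "?b \<otimes> inv ?a \<in> U'" using subpath_in[OF dt(2), of 1] de01 by simp
  have oneV: "\<one> \<in> V'" using subpath_in[OF dt(4), of 0] th00 by simp
  have aaV: "?a \<otimes> inv ?a \<in> V'" using oneV ac by simp
  obtain U1 V1 where UV1: "openin X U1" "openin X V1" "?b \<in> U1" "?a \<in> V1"
    "\<And>x y. x \<in> U1 \<Longrightarrow> y \<in> V1 \<Longrightarrow> x \<otimes> inv y \<in> U'"
    using div_nbhd[OF good_open[OF U'] bc ac baU] by blast
  obtain U2 V2 where UV2: "openin X U2" "openin X V2" "?a \<in> U2" "?a \<in> V2"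
    "\<And>x y. x \<in> U2 \<Longrightarrow> y \<in> V2 \<Longrightarrow> x \<otimes> inv y \<in> V'"
    using div_nbhd[OF good_open[OF V'] ac ac aaV] by blast
  obtain U where U: "good X U" "?b \<in> U" "U \<subseteq> U1"
    using good_exists[OF UV1(1,3)] by blast
  have "openin X (V1 \<inter> U2 \<inter> V2)" using UV1(2) UV2(1,2) by blast
  then obtain V where V: "good X V" "?a \<in> V" "V \<subseteq> V1 \<inter> U2 \<inter> V2"
    using good_exists[of "V1 \<inter> U2 \<inter> V2" ?a] UV1(4) UV2(3,4) by blast
  let ?N = "uc_nbhd X d U V"
  have rd: "pg_range d \<in> U" using U(2) by (simp add: pg_range_def)
  have sd: "pg_source d \<in> V" using V(2) by (simp add: pg_source_def)
  have dN: "d \<in> ?N" and NB: "?N \<in> uc_basis X" using uc_self[OF d U(1) rd V(1) sd] by auto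
  have "?N \<subseteq> {d' \<in> topspace (uc_topology X). fst (Kmap d') \<in> uc_nbhd X e U' V'}"
  proof
    fix d' assume d'N: "d' \<in> ?N"
    have d'F: "d' \<in> FG" using uc_nbhd_FG[OF d] d'N by blast
    obtain \<delta> \<theta> where dt': "d' = path_class X (pjoin (pjoin \<theta> ?\<alpha>) \<delta>)"
      "pathin (subtopology X U) \<delta>" "\<delta> 0 = pg_range d"
      "pathin (subtopology X V) \<theta>" "\<theta> 1 = pg_source d"
      using d'N by (rule uc_nbhd_E)
    have pdel: "pathin X \<delta>" and pth: "pathin X \<theta>" using dt' subpath_X by blast+
    have de0: "\<delta> 0 = ?b" using dt'(3) by (simp add: pg_range_def)
    have th1: "\<theta> 1 = ?a" using dt'(5) by (simp add: pg_source_def)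
    define P'' where "P'' = pjoin (pjoin \<theta> ?\<alpha>) \<delta>"
    have pP: "pathin X P''" unfolding P''_def using pdel pth pal de0 th1 by (intro pathin_pjoin) auto
    let ?a' = "\<theta> 0"
    have a'V: "?a' \<in> V" using subpath_in[OF dt'(4), of 0] by simp
    have a'c: "?a' \<in> carrier G" using a'V good_sub[OF V(1)] by blast
    have rep0: "rep d' 0 = ?a'" using rep_0[OF pP] dt'(1) by (simp add: P''_def)
    define P where "P = (\<lambda>t. \<theta> t \<otimes> inv ?a')"
    define Q where "Q = (\<lambda>t. \<delta> t \<otimes> inv ?a')"
    define L where "L = (\<lambda>t. ?a \<otimes> inv (\<theta> t))"
    define T where "T = (\<lambda>t. ?\<alpha> t \<otimes> inv ?a)"
    define R where "R = (\<lambda>t. ?b \<otimes> inv (\<theta> (1-t)))"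
    have pP2: "pathin X P" unfolding P_def using pth a'c by (intro pathin_mult pathin_cst) auto
    have pQ: "pathin X Q" unfolding Q_def using pdel a'c by (intro pathin_mult pathin_cst) auto
    have pL: "pathin X L" unfolding L_def using pth ac by (intro pathin_mult pathin_inv pathin_cst)
    have pTT: "pathin X T" unfolding T_def using pT .
    have pR: "pathin X R" unfolding R_def
      using pathin_preverse[OF pth] bc by (intro pathin_mult pathin_inv pathin_cst) (auto simp: preverse_def)
    have ia'c: "inv ?a' \<in> carrier G" using a'c by simp
    have "path_homotopic X (\<lambda>t. rep d' t \<otimes> inv ?a') (\<lambda>t. P'' t \<otimes> inv ?a')"
      using ph_rmul[OF ph_sym[OF rep_ph[OF pP]] ia'c] dt'(1) by (simp add: P''_def)
    also have "(\<lambda>t. P'' t \<otimes> inv ?a') = pjoin (pjoin P (\<lambda>t. ?\<alpha> t \<otimes> inv ?a')) Q"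
      by (simp add: P''_def pjoin_rmul P_def Q_def)
    also have "path_homotopic X (pjoin (pjoin P (\<lambda>t. ?\<alpha> t \<otimes> inv ?a')) Q) (pjoin (pjoin P (pjoin (pjoin L T) R)) Q)"
    proof (rule ph_pjoin[OF ph_pjoin[OF ph_refl[OF pP2]] ph_refl[OF pQ]])
      show "path_homotopic X (\<lambda>t. ?\<alpha> t \<otimes> inv ?a') (pjoin (pjoin L T) R)"
        using ph_shift[OF pal pth] th1 by (simp add: L_def T_def R_def)
    qed (simp_all add: P_def Q_def th1 de0)
    also have "path_homotopic X (pjoin (pjoin P (pjoin (pjoin L T) R)) Q) (pjoin (pjoin (pjoin P L) T) (pjoin R Q))"
      by (rule rearr2[OF pP2 pL pTT pR pQ]) (simp_all add: P_def L_def T_def R_def Q_def th1 de0)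
    also have "path_homotopic X (pjoin (pjoin (pjoin P L) T) (pjoin R Q)) (pjoin (pjoin (\<lambda>t. T 0) T) (pjoin R Q))"
    proof (rule ph_pjoin[OF ph_pjoin[OF _ ph_refl[OF pTT]] ph_refl])
      have lV: "pathin (subtopology X V') (pjoin P L)"
      proof -
        have "pathin X (pjoin P L)" using pP2 pL by (rule pathin_pjoin) (simp add: P_def L_def th1)
        moreover have "pjoin P L t \<in> V'" if "t \<in> {0..1}" for t
        proof -
          have "\<theta> u \<in> V" if "u \<in> {0..1}" for u using subpath_in[OF dt'(4) that] .
          then have "\<theta> u \<in> U2" "\<theta> u \<in> V2" if "u \<in> {0..1}" for u using V(3) that by blast+
          moreover have "?a' \<in> V2" "?a \<in> U2" using V(3) a'V UV2(3) by blast+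
          ultimately show ?thesis using that UV2(5) unfolding pjoin_def P_def L_def by auto
        qed
        ultimately show ?thesis by (simp add: pathin_subtopology)
      qed
      have e0: "pjoin P L 0 = \<one>" using a'c by (simp add: P_def)
      have e1: "pjoin P L 1 = \<one>" using ac th1 by (simp add: L_def)
      have "path_homotopic X (pjoin P L) (\<lambda>t. \<one>)"
        using good_null[OF V' oneV] lV e0 e1 unfolding null_loop_at_def by blast
      then show "path_homotopic X (pjoin P L) (\<lambda>t. T 0)" using ac by (simp add: T_def)
      show "pathin X (pjoin R Q)" using pR pQ by (rule pathin_pjoin) (simp add: R_def Q_def de0)
    qed (simp_all add: L_def T_def R_def th1)
    also have "path_homotopic X (pjoin (pjoin (\<lambda>t. T 0) T) (pjoin R Q)) (pjoin T (pjoin R Q))"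
      by (rule ph_pjoin[OF ph_lunit[OF pTT] ph_refl]) (use pR pQ in \<open>simp_all add: pathin_pjoin R_def Q_def de0 T_def th1\<close>)
    also have "path_homotopic X (pjoin T (pjoin R Q)) (pjoin (pjoin (pjoin \<theta>0 ?\<rho>) \<delta>0) (pjoin R Q))"
      by (rule ph_pjoin[OF hT[folded T_def] ph_refl]) (use pR pQ in \<open>simp_all add: pathin_pjoin R_def Q_def de0 T_def th1\<close>)
    also have "path_homotopic X (pjoin (pjoin (pjoin \<theta>0 ?\<rho>) \<delta>0) (pjoin R Q)) (pjoin (pjoin \<theta>0 ?\<rho>) (pjoin (pjoin \<delta>0 R) Q))"
    proof (rule rearr3[OF _ pdel0 pR pQ])
      show "pathin X (pjoin \<theta>0 ?\<rho>)" using pth0 prho dt(5) by (intro pathin_pjoin) (simp_all add: pg_source_def)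
    qed (simp_all add: dt(3) pg_range_def de01 R_def Q_def th1 de0)
    finally have hh: "path_homotopic X (\<lambda>t. rep d' t \<otimes> inv ?a') (pjoin (pjoin \<theta>0 ?\<rho>) (pjoin (pjoin \<delta>0 R) Q))" .
    have RU: "pathin (subtopology X U') R"
    proof -
      have "R t \<in> U'" if "t \<in> {0..1}" for t
      proof -
        have "\<theta> (1-t) \<in> V" using subpath_in[OF dt'(4), of "1-t"] that by simp
        then show ?thesis unfolding R_def using UV1(5) U(2,3) V(3) by blast
      qed
      then show ?thesis using pR by (simp add: pathin_subtopology)
    qed
    have QU: "pathin (subtopology X U') Q"
    proof -
      have "Q t \<in> U'" if "t \<in> {0..1}" for t
      proof -
        have "\<delta> t \<in> U" using subpath_in[OF dt'(2) that] .
        then show ?thesis unfolding Q_def using UV1(5) U(3) V(3) a'V by blast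
      qed
      then show ?thesis using pQ by (simp add: pathin_subtopology)
    qed
    have d2: "pathin (subtopology X U') (pjoin (pjoin \<delta>0 R) Q)"
      by (intro pathin_pjoin dt(2) RU QU) (simp_all add: de01 R_def Q_def th1 de0)
    have "path_class X (\<lambda>t. rep d' t \<otimes> inv ?a') \<in> uc_nbhd X e U' V'"
      by (rule uc_nbhd_I[OF d2 _ dt(4) dt(5) ph_sym[OF hh]]) (simp add: dt(3))
    then have "fst (Kmap d') \<in> uc_nbhd X e U' V'" by (simp add: Kmap_def rep0)
    then show "d' \<in> {d' \<in> topspace (uc_topology X). fst (Kmap d') \<in> uc_nbhd X e U' V'}"
      using d'F topspace_uc[OF lpc sl] by simp
  qed
  then show ?thesis using openin_uc_basis[OF NB] dN by blast
qed

lemma K1_cont: "continuous_map (uc_topology X) (uc_topology X) (\<lambda>d. fst (Kmap d))"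
proof (rule cont_into_uc)
  show "(\<lambda>d. fst (Kmap d)) \<in> topspace (uc_topology X) \<rightarrow> FG"
    using K_in HH_FG topspace_uc[OF lpc sl] by (auto simp: mem_Times_iff)
  fix B assume "B \<in> uc_basis X"
  then obtain e U' V' where B: "B = uc_nbhd X e U' V'" "e \<in> FG" "good X U'" "good X V'"
    by (rule basis_E)
  show "openin (uc_topology X) {x \<in> topspace (uc_topology X). fst (Kmap x) \<in> B}"
  proof (subst openin_subopen, intro ballI)
    fix d assume x: "d \<in> {x \<in> topspace (uc_topology X). fst (Kmap x) \<in> B}"
    then have dF: "d \<in> FG" using topspace_uc[OF lpc sl] by simp
    from K1_local[OF dF B(2,3,4)] x B
    show "\<exists>T. openin (uc_topology X) T \<and> d \<in> T \<and> T \<subseteq> {x \<in> topspace (uc_topology X). fst (Kmap x) \<in> B}"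
      by simp
  qed
qed

lemma K2_cont: "continuous_map (uc_topology X) X (\<lambda>d. rep d 0)"
  unfolding continuous_map_def
proof (intro conjI allI impI)
  show "(\<lambda>d. rep d 0) \<in> topspace (uc_topology X) \<rightarrow> topspace X"
    using rep_in topspace_uc[OF lpc sl] carr by auto
  fix W assume W: "openin X W"
  show "openin (uc_topology X) {x \<in> topspace (uc_topology X). rep x 0 \<in> W}"
  proof (subst openin_subopen, intro ballI)
    fix d assume x: "d \<in> {x \<in> topspace (uc_topology X). rep x 0 \<in> W}"
    then have dF: "d \<in> FG" and dW: "rep d 0 \<in> W" using topspace_uc[OF lpc sl] by auto
    obtain V where V: "good X V" "rep d 0 \<in> V" "V \<subseteq> W" using good_exists[OF W dW] by blast
    have "rep d 1 \<in> topspace X" using rep_in[OF dF] carr by auto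
    then obtain U where U: "good X U" "rep d 1 \<in> U" using good_exists[OF openin_topspace] by blast
    have rd: "pg_range d \<in> U" and sd: "pg_source d \<in> V" using U V by (simp_all add: pg_range_def pg_source_def)
    have dN: "d \<in> uc_nbhd X d U V" and NB: "uc_nbhd X d U V \<in> uc_basis X"
      using uc_self[OF dF U(1) rd V(1) sd] by auto
    have "uc_nbhd X d U V \<subseteq> {x \<in> topspace (uc_topology X). rep x 0 \<in> W}"
    proof
      fix d' assume d'N: "d' \<in> uc_nbhd X d U V"
      have d'F: "d' \<in> FG" using uc_nbhd_FG[OF dF] d'N by blast
      obtain \<delta> \<theta> where dt': "d' = path_class X (pjoin (pjoin \<theta> (rep d)) \<delta>)"
        "pathin (subtopology X U) \<delta>" "\<delta> 0 = pg_range d"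
        "pathin (subtopology X V) \<theta>" "\<theta> 1 = pg_source d"
        using d'N by (rule uc_nbhd_E)
      have pP: "pathin X (pjoin (pjoin \<theta> (rep d)) \<delta>)"
        using dt' rep_pathin[OF dF] subpath_X by (intro pathin_pjoin) (auto simp: pg_range_def pg_source_def)
      have "rep d' 0 = \<theta> 0" using rep_0[OF pP] dt'(1) by simp
      moreover have "\<theta> 0 \<in> V" using subpath_in[OF dt'(4), of 0] by simp
      ultimately show "d' \<in> {x \<in> topspace (uc_topology X). rep x 0 \<in> W}"
        using d'F V(3) topspace_uc[OF lpc sl] by auto
    qed
    then show "\<exists>T. openin (uc_topology X) T \<and> d \<in> T \<and> T \<subseteq> {x \<in> topspace (uc_topology X). rep x 0 \<in> W}"
      using openin_uc_basis[OF NB] dN by blast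
  qed
qed

lemma K_cont: "continuous_map (uc_topology X) (tg_topology X G) Kmap"
proof -
  have "continuous_map (uc_topology X) (ucg_topology X G) (\<lambda>d. fst (Kmap d))"
    unfolding ucg_topology_def continuous_map_in_subtopology
    using K1_cont K_in topspace_uc[OF lpc sl] by (auto simp: mem_Times_iff)
  moreover have "(\<lambda>d. snd (Kmap d)) = (\<lambda>d. rep d 0)" by (simp add: Kmap_def)
  ultimately have "continuous_map (uc_topology X) (tg_topology X G) (\<lambda>d. (fst (Kmap d), snd (Kmap d)))"
    unfolding tg_topology_def continuous_map_paired using K2_cont by simp
  then show ?thesis by simp
qed

lemma main_iso:
  "topological_groupoid_iso
           (tg_topology X G) tg_source (tg_range G) (tg_mult X G) (tg_inv X G)
           (uc_topology X) pg_source pg_range (pg_mult X) (pg_inv X) J"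
  unfolding topological_groupoid_iso_def
proof (intro conjI ballI)
  show "homeomorphic_map (tg_topology X G) (uc_topology X) J"
    unfolding homeomorphic_map_maps homeomorphic_maps_def
  proof (intro exI conjI ballI)
    show "continuous_map (tg_topology X G) (uc_topology X) J" by (rule J_cont)
    show "continuous_map (uc_topology X) (tg_topology X G) Kmap" by (rule K_cont)
    fix x assume "x \<in> topspace (tg_topology X G)"
    then obtain c g where "x = (c,g)" "c \<in> HH" "g \<in> carrier G" by (auto simp: topspace_T)
    then show "Kmap (J x) = x" using KJ by simp
  next
    fix y assume "y \<in> topspace (uc_topology X)"
    then show "J (Kmap y) = y" using JK topspace_uc[OF lpc sl] by simp
  qed
next
  fix x y assume x: "x \<in> topspace (tg_topology X G)" and y: "y \<in> topspace (tg_topology X G)"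
  obtain c g where xe: "x = (c,g)" "c \<in> HH" "g \<in> carrier G" using x by (auto simp: topspace_T)
  obtain c' g' where ye: "y = (c',g')" "c' \<in> HH" "g' \<in> carrier G" using y by (auto simp: topspace_T)
  have s: "pg_source (J x) = tg_source x" using J_source[OF xe(2,3)] xe by (simp add: tg_source_def)
  have r: "pg_range (J y) = tg_range G y"
    using J_range[OF HH_FG[OF ye(2)] ye(3)] ye by (simp add: tg_range_def ucg_proj_def)
  show "tg_source x = tg_range G y \<longleftrightarrow> pg_source (J x) = pg_range (J y)" using s r by simp
  show "tg_source x = tg_range G y \<longrightarrow> J (tg_mult X G x y) = pg_mult X (J x) (J y)"
    using J_mult[of x y] xe ye by simp
next
  fix x assume x: "x \<in> topspace (tg_topology X G)"
  obtain c g where xe: "x = (c,g)" "c \<in> HH" "g \<in> carrier G" using x by (auto simp: topspace_T)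
  show "J (tg_inv X G x) = pg_inv X (J x)" using J_inv[of x] xe by simp
qed

end

theorem theorem2p13:
  fixes X :: "'a topology" and G :: "'a monoid"
  assumes "topological_group X G"
    and "locally_path_connected_space X"
    and "path_connected_space X"
    and "semilocally_simply_connected X"
  shows "tg_arrows X G = topspace (tg_topology X G)
       \<and> fundamental_groupoid X = topspace (uc_topology X)
       \<and> topological_groupoid_iso
           (tg_topology X G) tg_source (tg_range G) (tg_mult X G) (tg_inv X G)
           (uc_topology X) pg_source pg_range (pg_mult X) (pg_inv X)
           (J_map X G)"
proof -
  interpret mainctx X G
    by (unfold_locales) (use assms in auto)
  show ?thesis
    using main_iso topspace_uc[OF lpc sl] topspace_T carr
    by (simp add: tg_arrows_def)
qed

end
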